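(* Let $\mathcal H$ and $\mathcal H'$ be hypergraphs such that for any $\sigma\in\mathcal H$ and any $\sigma'\in\mathcal H'$, either $\sigma\cap\sigma'=\emptyset$ or $\sigma\cap\sigma'\in\mathcal H\cap\mathcal H'$. Then there are long exact sequences of relative embedded homology $$\cdots\to H_n(\mathcal H\cap\mathcal H',\delta\mathcal H\cap\delta\mathcal H')\to H_n(\mathcal H,\delta\mathcal H)\oplus H_n(\mathcal H',\delta\mathcal H')\to H_n(\mathcal H\cup\mathcal H',\delta\mathcal H\cup\delta\mathcal H')\to H_{n-1}(\mathcal H\cap\mathcal H',\delta\mathcal H\cap\delta\mathcal H')\to\cdots$$ and $$\cdots\to H_n(\Delta\mathcal H\cap\Delta\mathcal H',\mathcal H\cap\mathcal H')\to H_n(\Delta\mathcal H,\mathcal H)\oplus H_n(\Delta\mathcal H',\mathcal H')\to H_n(\Delta\mathcal H\cup\Delta\mathcal H',\mathcal H\cup\mathcal H')\to H_{n-1}(\Delta\mathcal H\cap\Delta\mathcal H',\mathcal H\cap\mathcal H')\to\cdots.$$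
   Context: A hypergraph is a finite set of nonempty finite subsets of a vertex set (hyperedges); an $n$-hyperedge has $n+1$ vertices. Unions and intersections are of sets of hyperedges. The associated simplicial complex is $\Delta\mathcal H=\{\sigma\ne\emptyset:\sigma\subseteq\tau\text{ for some }\tau\in\mathcal H\}$; the lower-associated simplicial complex is $\delta\mathcal H=\{\sigma\in\mathcal H:\text{every nonempty }\tau\subseteq\sigma\text{ lies in }\mathcal H\}$. Fix an abelian coefficient group $G$; chains are simplicial chains with coefficients in $G$ with boundary $\partial$; $G(\mathcal H)_n$ is the group of $G$-linear combinations of $n$-hyperedges of $\mathcal H$; $\mathrm{Inf}_n(\mathcal H)=G(\mathcal H)_n\cap\partial_n^{-1}(G(\mathcal H)_{n-1})$. For $\mathcal A\subseteq\mathcal B$, relative embedded homology is $H_n(\mathcal B,\mathcal A)=H_n(\mathrm{Inf}_*(\mathcal B)/\mathrm{Inf}_*(\mathcal A))$. *)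

theory Defs
  imports "HOL-Algebra.Algebra"
begin

text \<open>A hypergraph on vertex type 'v is a finite set of nonempty finite vertex sets.
  Vertices are linearly ordered; the order is used to orient simplices for the boundary.\<close>

definition hypergraph :: "'v set set \<Rightarrow> bool" where
  "hypergraph HH \<longleftrightarrow> finite HH \<and> (\<forall>\<sigma>\<in>HH. finite \<sigma> \<and> \<sigma> \<noteq> {})"

definition assoc_cplx :: "'v set set \<Rightarrow> 'v set set" where
  "assoc_cplx HH = {\<sigma>. \<sigma> \<noteq> {} \<and> (\<exists>\<tau>\<in>HH. \<sigma> \<subseteq> \<tau>)}"

definition lower_cplx :: "'v set set \<Rightarrow> 'v set set" where
  "lower_cplx HH = {\<sigma>\<in>HH. \<forall>\<tau>. \<tau> \<noteq> {} \<and> \<tau> \<subseteq> \<sigma> \<longrightarrow> \<tau> \<in> HH}"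

text \<open>A chain is a finitely supported function from vertex sets to the coefficient group.\<close>
definition csupp :: "('v set \<Rightarrow> 'g::zero) \<Rightarrow> 'v set set" where
  "csupp c = {\<sigma>. c \<sigma> \<noteq> 0}"

text \<open>G(HH)_n: linear combinations of n-hyperedges of HH (hyperedges with n+1 vertices).
  Degrees are integers; in negative degrees this group is trivial.\<close>
definition Gchains :: "'v set set \<Rightarrow> int \<Rightarrow> ('v set \<Rightarrow> 'g::zero) set" where
  "Gchains HH n = {c. finite (csupp c) \<and>
      (\<forall>\<sigma>\<in>csupp c. \<sigma> \<in> HH \<and> finite \<sigma> \<and> \<sigma> \<noteq> {} \<and> int (card \<sigma>) = n + 1)}"

text \<open>Simplicial boundary: for sigma = {v0 < ... < vn}, boundary sigma = sum_i (-1)^i (sigma - {vi}). No augmentation: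
  the boundary of a 0-chain is 0.\<close>
definition bd :: "('v::linorder set \<Rightarrow> 'g::ab_group_add) \<Rightarrow> 'v set \<Rightarrow> 'g" where
  "bd c \<tau> = (if \<tau> = {} then 0 else
     (\<Sum>v\<in>{v. v \<notin> \<tau> \<and> insert v \<tau> \<in> csupp c}.
        (if even (card {w\<in>\<tau>. w < v}) then c (insert v \<tau>) else - c (insert v \<tau>))))"

definition inf_chains :: "'v::linorder set set \<Rightarrow> int \<Rightarrow> ('v set \<Rightarrow> 'g::ab_group_add) set" where
  "inf_chains HH n = {c \<in> Gchains HH n. bd c \<in> Gchains HH (n - 1)}"

definition cadd :: "('v set \<Rightarrow> 'g::ab_group_add) \<Rightarrow> ('v set \<Rightarrow> 'g) \<Rightarrow> 'v set \<Rightarrow> 'g" where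
  "cadd x y = (\<lambda>\<sigma>. x \<sigma> + y \<sigma>)"

text \<open>Cycles of the quotient complex, lifted to Inf_n(B).\<close>
definition rel_cycles :: "'v::linorder set set \<Rightarrow> 'v set set \<Rightarrow> int \<Rightarrow> ('v set \<Rightarrow> 'g::ab_group_add) set" where
  "rel_cycles B A n = {c \<in> inf_chains B n. bd c \<in> inf_chains A (n - 1)}"

text \<open>Boundaries of the quotient complex, lifted to Inf_n(B) (including Inf_n(A)).\<close>
definition rel_bounds :: "'v::linorder set set \<Rightarrow> 'v set set \<Rightarrow> int \<Rightarrow> ('v set \<Rightarrow> 'g::ab_group_add) set" where
  "rel_bounds B A n = {cadd (bd d) a | d a. d \<in> inf_chains B (n + 1) \<and> a \<in> inf_chains A n}"

definition chain_monoid :: "('v set \<Rightarrow> 'g::ab_group_add) set \<Rightarrow> ('v set \<Rightarrow> 'g) monoid" where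
  "chain_monoid S = \<lparr>carrier = S, monoid.mult = cadd, one = (\<lambda>_. 0)\<rparr>"

definition rel_homology :: "'v::linorder set set \<Rightarrow> 'v set set \<Rightarrow> int \<Rightarrow> ('v set \<Rightarrow> 'g::ab_group_add) set monoid" where
  "rel_homology B A n = chain_monoid (rel_cycles B A n) Mod rel_bounds B A n"

text \<open>Map H_n(B,A) \<rightarrow> H_n(B',A') induced by the inclusion of pairs (class of c \<mapsto> class of c).\<close>
definition induced :: "'v::linorder set set \<Rightarrow> 'v set set \<Rightarrow> int \<Rightarrow> ('v set \<Rightarrow> 'g::ab_group_add) set \<Rightarrow> ('v set \<Rightarrow> 'g) set" where
  "induced B' A' n Q = (\<lambda>h. cadd h (SOME c. c \<in> Q)) ` rel_bounds B' A' n"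

definition mv_f :: "'v::linorder set set \<Rightarrow> 'v set set \<Rightarrow> 'v set set \<Rightarrow> 'v set set \<Rightarrow> int
    \<Rightarrow> ('v set \<Rightarrow> 'g::ab_group_add) set \<Rightarrow> ('v set \<Rightarrow> 'g) set \<times> ('v set \<Rightarrow> 'g) set" where
  "mv_f B1 A1 B2 A2 n Q = (induced B1 A1 n Q, induced B2 A2 n Q)"

definition mv_g :: "'v::linorder set set \<Rightarrow> 'v set set \<Rightarrow> 'v set set \<Rightarrow> 'v set set \<Rightarrow> int
    \<Rightarrow> ('v set \<Rightarrow> 'g::ab_group_add) set \<times> ('v set \<Rightarrow> 'g) set \<Rightarrow> ('v set \<Rightarrow> 'g) set" where
  "mv_g B1 A1 B2 A2 n Y =
     induced (B1 \<union> B2) (A1 \<union> A2) n (fst Y) \<otimes>\<^bsub>rel_homology (B1 \<union> B2) (A1 \<union> A2) n\<^esub>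
     inv\<^bsub>rel_homology (B1 \<union> B2) (A1 \<union> A2) n\<^esub> (induced (B1 \<union> B2) (A1 \<union> A2) n (snd Y))"

definition MV_long_exact :: "'g::ab_group_add itself \<Rightarrow> 'v::linorder set set \<Rightarrow> 'v set set
    \<Rightarrow> 'v set set \<Rightarrow> 'v set set \<Rightarrow> bool" where
  "MV_long_exact _ B1 A1 B2 A2 \<longleftrightarrow>
    (\<exists>conn :: int \<Rightarrow> ('v set \<Rightarrow> 'g) set \<Rightarrow> ('v set \<Rightarrow> 'g) set.
      \<forall>n::int.
        (mv_f B1 A1 B2 A2 n :: ( 'v set \<Rightarrow> 'g) set \<Rightarrow> _) \<in> hom (rel_homology (B1 \<inter> B2) (A1 \<inter> A2) n)
                                (rel_homology B1 A1 n \<times>\<times> rel_homology B2 A2 n) \<and>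
        (mv_g B1 A1 B2 A2 n :: _ \<Rightarrow> ('v set \<Rightarrow> 'g) set) \<in> hom (rel_homology B1 A1 n \<times>\<times> rel_homology B2 A2 n)
                                (rel_homology (B1 \<union> B2) (A1 \<union> A2) n) \<and>
        conn n \<in> hom (rel_homology (B1 \<union> B2) (A1 \<union> A2) n)
                     (rel_homology (B1 \<inter> B2) (A1 \<inter> A2) (n - 1)) \<and>
        (mv_f B1 A1 B2 A2 n :: ('v set \<Rightarrow> 'g) set \<Rightarrow> _) ` carrier (rel_homology (B1 \<inter> B2) (A1 \<inter> A2) n)
          = kernel (rel_homology B1 A1 n \<times>\<times> rel_homology B2 A2 n)
                   (rel_homology (B1 \<union> B2) (A1 \<union> A2) n) (mv_g B1 A1 B2 A2 n) \<and>
        mv_g B1 A1 B2 A2 n ` carrier (rel_homology B1 A1 n \<times>\<times> rel_homology B2 A2 n)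
          = kernel (rel_homology (B1 \<union> B2) (A1 \<union> A2) n)
                   (rel_homology (B1 \<inter> B2) (A1 \<inter> A2) (n - 1)) (conn n) \<and>
        conn n ` carrier (rel_homology (B1 \<union> B2) (A1 \<union> A2) n)
          = kernel (rel_homology (B1 \<inter> B2) (A1 \<inter> A2) (n - 1))
                   (rel_homology B1 A1 (n - 1) \<times>\<times> rel_homology B2 A2 (n - 1))
                   (mv_f B1 A1 B2 A2 (n - 1)))"

end

theory Submission
  imports Defs "HOL-Library.Function_Algebras"
begin


lemma cadd_eq: "cadd x y = x + y" by (simp add: cadd_def plus_fun_def fun_eq_iff)

definition sg :: "nat \<Rightarrow> 'g::ab_group_add \<Rightarrow> 'g" where
  "sg k x = (if even k then x else - x)"

definition ecount :: "'v::linorder set \<Rightarrow> 'v \<Rightarrow> nat" where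
  "ecount \<tau> v = card {w\<in>\<tau>. w < v}"

definition idx :: "('v set \<Rightarrow> 'g::zero) \<Rightarrow> 'v set \<Rightarrow> 'v set" where
  "idx c \<tau> = {v. v \<notin> \<tau> \<and> insert v \<tau> \<in> csupp c}"

lemma sg_zero[simp]: "sg k 0 = 0" by (simp add: sg_def)
lemma sg_add: "sg k (a + b) = sg k a + sg k b" by (simp add: sg_def)
lemma sg_neg: "sg k (- a) = - sg k a" by (simp add: sg_def)
lemma sg_sg: "sg k (sg m a) = sg (k + m) a" by (simp add: sg_def)
lemma sg_Suc: "sg (Suc k) a = - sg k a" by (simp add: sg_def)
lemma sg_sum: "finite F \<Longrightarrow> sg k (\<Sum>v\<in>F. f v) = (\<Sum>v\<in>F. sg k (f v))"
  by (simp add: sg_def sum_negf)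

lemma bd_alt: "bd c \<tau> = (if \<tau> = {} then 0 else \<Sum>v\<in>idx c \<tau>. sg (ecount \<tau> v) (c (insert v \<tau>)))"
  by (simp add: bd_def sg_def ecount_def idx_def)

lemma finite_idx: 
  assumes f: "finite (csupp c)" shows "finite (idx c \<tau>)"
proof -
  have inj: "inj_on (\<lambda>v. insert v \<tau>) (idx c \<tau>)"
  proof (rule inj_onI)
    fix u v assume u: "u \<in> idx c \<tau>" and v: "v \<in> idx c \<tau>" and eq: "insert u \<tau> = insert v \<tau>"
    have "u \<in> insert v \<tau>" using eq by blast
    moreover have "u \<notin> \<tau>" using u by (simp add: idx_def)
    ultimately show "u = v" by blast
  qed
  have "(\<lambda>v. insert v \<tau>) ` idx c \<tau> \<subseteq> csupp c" by (auto simp: idx_def)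
  then have "finite ((\<lambda>v. insert v \<tau>) ` idx c \<tau>)" using f by (rule finite_subset)
  then show ?thesis using inj by (rule finite_imageD)
qed

lemma bd_extend:
  assumes fin: "finite F" and sub: "idx c \<tau> \<subseteq> F" and dj: "F \<inter> \<tau> = {}" and ne: "\<tau> \<noteq> {}"
  shows "bd c \<tau> = (\<Sum>v\<in>F. sg (ecount \<tau> v) (c (insert v \<tau>)))"
proof -
  have "bd c \<tau> = (\<Sum>v\<in>idx c \<tau>. sg (ecount \<tau> v) (c (insert v \<tau>)))"
    using ne by (simp add: bd_alt)
  also have "\<dots> = (\<Sum>v\<in>F. sg (ecount \<tau> v) (c (insert v \<tau>)))"
  proof (rule sum.mono_neutral_left[OF fin sub], rule ballI)
    fix i assume i: "i \<in> F - idx c \<tau>"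
    then have "i \<notin> \<tau>" using dj by blast
    then have "c (insert i \<tau>) = 0" using i by (simp add: idx_def csupp_def)
    then show "sg (ecount \<tau> i) (c (insert i \<tau>)) = 0" by simp
  qed
  finally show ?thesis .
qed

lemma bd_empty[simp]: "bd c {} = 0" by (simp add: bd_def)

lemma bd_nonzero: 
  assumes h: "bd c \<tau> \<noteq> 0" shows "\<tau> \<noteq> {} \<and> (\<exists>v. v \<notin> \<tau> \<and> insert v \<tau> \<in> csupp c)"
proof -
  have "\<tau> \<noteq> {}" using h by auto
  moreover have "idx c \<tau> \<noteq> {}"
  proof
    assume "idx c \<tau> = {}"
    then have "bd c \<tau> = 0" by (simp add: bd_alt)
    then show False using h by simp
  qed
  ultimately show ?thesis by (auto simp: idx_def)
qed

lemma csupp_add: "csupp (x + y) \<subseteq> csupp x \<union> csupp (y::'a set \<Rightarrow> 'g::ab_group_add)"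
  by (auto simp: csupp_def)
lemma csupp_neg[simp]: "csupp (- x) = csupp (x::'a set \<Rightarrow> 'g::ab_group_add)"
  by (auto simp: csupp_def)
lemma csupp_zero[simp]: "csupp (0::'a set \<Rightarrow> 'g::zero) = {}"
  by (auto simp: csupp_def)
lemma csupp_diff: "csupp (x - y) \<subseteq> csupp x \<union> csupp (y::'a set \<Rightarrow> 'g::ab_group_add)"
  by (auto simp: csupp_def)

lemma bd_add:
  assumes "finite (csupp x)" "finite (csupp y)"
  shows "bd (x + y) = bd x + bd y"
proof (rule ext)
  fix \<tau>
  show "bd (x + y) \<tau> = (bd x + bd y) \<tau>"
  proof (cases "\<tau> = {}")
    case True then show ?thesis by simp
  next
    case False
    let ?F = "idx x \<tau> \<union> idx y \<tau>"
    have fin: "finite ?F" using assms finite_idx by blast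
    have d: "?F \<inter> \<tau> = {}" by (auto simp: idx_def)
    have i: "idx (x + y) \<tau> \<subseteq> ?F" by (auto simp: idx_def csupp_def)
    have sx: "idx x \<tau> \<subseteq> ?F" and sy: "idx y \<tau> \<subseteq> ?F" by blast+
    have "bd (x + y) \<tau> = (\<Sum>v\<in>?F. sg (ecount \<tau> v) ((x + y) (insert v \<tau>)))"
      by (rule bd_extend[OF fin i d False])
    also have "\<dots> = (\<Sum>v\<in>?F. sg (ecount \<tau> v) (x (insert v \<tau>))) + (\<Sum>v\<in>?F. sg (ecount \<tau> v) (y (insert v \<tau>)))"
      by (simp only: plus_fun_def sg_add sum.distrib)
    also have "\<dots> = bd x \<tau> + bd y \<tau>"
      by (simp only: bd_extend[OF fin sx d False] bd_extend[OF fin sy d False])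
    finally show ?thesis by (simp only: plus_fun_def)
  qed
qed

lemma idx_neg[simp]: "idx (- x) \<tau> = idx (x::'a set \<Rightarrow> 'g::ab_group_add) \<tau>" by (simp add: idx_def)

lemma bd_neg: "bd (- x) = - bd x"
  by (rule ext) (simp add: bd_alt sg_neg sum_negf)

lemma bd_zero[simp]: "bd 0 = 0"
  by (rule ext) (simp add: bd_alt idx_def)

lemma bd_diff:
  assumes "finite (csupp x)" "finite (csupp y)"
  shows "bd (x - y) = bd x - bd y"
  using bd_add[of x "- y"] assms by (simp add: bd_neg)

lemma csupp_bd: "csupp (bd c) \<subseteq> {\<tau>. \<tau> \<noteq> {} \<and> (\<exists>v. v \<notin> \<tau> \<and> insert v \<tau> \<in> csupp c)}"
  using bd_nonzero by (auto simp: csupp_def)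

lemma finite_csupp_bd:
  assumes "finite (csupp c)" "\<forall>\<sigma>\<in>csupp c. finite \<sigma>"
  shows "finite (csupp (bd c))"
proof -
  have "csupp (bd c) \<subseteq> (\<Union>\<sigma>\<in>csupp c. (\<lambda>v. \<sigma> - {v}) ` \<sigma>)"
  proof
    fix \<tau> assume "\<tau> \<in> csupp (bd c)"
    then obtain v where v: "v \<notin> \<tau>" "insert v \<tau> \<in> csupp c" using csupp_bd by blast
    have "\<tau> = insert v \<tau> - {v}" using v(1) by simp
    then have "\<tau> \<in> (\<lambda>u. insert v \<tau> - {u}) ` insert v \<tau>" by blast
    then show "\<tau> \<in> (\<Union>\<sigma>\<in>csupp c. (\<lambda>v. \<sigma> - {v}) ` \<sigma>)" using v(2) by blast
  qed
  moreover have "finite (\<Union>\<sigma>\<in>csupp c. (\<lambda>v. \<sigma> - {v}) ` \<sigma>)" using assms by simp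
  ultimately show ?thesis by (rule finite_subset)
qed

lemma ecount_insert_less:
  assumes "finite \<rho>" "v < w"
  shows "ecount (insert v \<rho>) w = (if v \<in> \<rho> then ecount \<rho> w else Suc (ecount \<rho> w))"
proof -
  have "{u\<in>insert v \<rho>. u < w} = insert v {u\<in>\<rho>. u < w}" using assms by auto
  moreover have "finite {u\<in>\<rho>. u < w}" using assms(1) by simp
  moreover have "v \<in> {u\<in>\<rho>. u < w} \<longleftrightarrow> v \<in> \<rho>" using assms(2) by simp
  ultimately show ?thesis unfolding ecount_def by (simp add: card_insert_if)
qed

lemma ecount_insert_greater:
  assumes "w < v"
  shows "ecount (insert v \<rho>) w = ecount \<rho> w"
proof -
  have "{u\<in>insert v \<rho>. u < w} = {u\<in>\<rho>. u < w}" using assms by auto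
  then show ?thesis by (simp add: ecount_def)
qed

lemma bd_bd:
  assumes fc: "finite (csupp c)" and fs: "\<forall>\<sigma>\<in>csupp c. finite \<sigma>"
  shows "bd (bd c) = 0"
proof (rule ext)
  fix \<rho>
  show "bd (bd c) \<rho> = 0 \<rho>"
  proof (cases "\<rho> = {}")
    case True then show ?thesis by simp
  next
    case ne: False
    show ?thesis
    proof (cases "finite \<rho>")
      case False
      have "bd c (insert v \<rho>) = 0" for v
      proof (rule ccontr)
        assume "bd c (insert v \<rho>) \<noteq> 0"
        then obtain w where "insert w (insert v \<rho>) \<in> csupp c" using bd_nonzero by blast
        then show False using fs False by auto
      qed
      then have "idx (bd c) \<rho> = {}" by (auto simp: idx_def csupp_def)
      then show ?thesis by (simp add: bd_alt)
    next
      case fin: True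
      define U where "U = \<Union>(csupp c)"
      define F where "F = U - \<rho>"
      have finF: "finite F" unfolding F_def U_def using fc fs by auto
      have dF: "F \<inter> \<rho> = {}" by (auto simp: F_def)
      have iF: "idx (bd c) \<rho> \<subseteq> F"
      proof
        fix v assume "v \<in> idx (bd c) \<rho>"
        then have "v \<notin> \<rho>" "bd c (insert v \<rho>) \<noteq> 0" by (auto simp: idx_def csupp_def)
        then obtain w where "insert w (insert v \<rho>) \<in> csupp c" using bd_nonzero by blast
        then have "v \<in> U" unfolding U_def by blast
        then show "v \<in> F" using \<open>v \<notin> \<rho>\<close> by (auto simp: F_def)
      qed
      define f where "f v w = sg (ecount \<rho> v + ecount (insert v \<rho>) w) (c (insert w (insert v \<rho>)))" for v w
      have inner: "bd c (insert v \<rho>) = (\<Sum>w\<in>F - {v}. sg (ecount (insert v \<rho>) w) (c (insert w (insert v \<rho>))))"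
        if "v \<in> F" for v
      proof (rule bd_extend)
        show "finite (F - {v})" using finF by simp
        show "idx c (insert v \<rho>) \<subseteq> F - {v}"
        proof
          fix w assume "w \<in> idx c (insert v \<rho>)"
          then show "w \<in> F - {v}" by (auto simp: idx_def F_def U_def)
        qed
        show "(F - {v}) \<inter> insert v \<rho> = {}" using dF by auto
        show "insert v \<rho> \<noteq> {}" by simp
      qed
      have "bd (bd c) \<rho> = (\<Sum>v\<in>F. sg (ecount \<rho> v) (bd c (insert v \<rho>)))"
        by (rule bd_extend[OF finF iF dF ne])
      also have "\<dots> = (\<Sum>v\<in>F. \<Sum>w\<in>F - {v}. f v w)"
        using finF by (intro sum.cong refl) (simp add: inner sg_sum sg_sg f_def)
      also have "\<dots> = (\<Sum>v\<in>F. \<Sum>w\<in>F. (if v < w then f v w else 0) + (if w < v then f v w else 0))"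
      proof (rule sum.cong[OF refl])
        fix v assume "v \<in> F"
        have "(\<Sum>w\<in>F. (if v < w then f v w else 0) + (if w < v then f v w else 0))
            = (\<Sum>w\<in>F - {v}. (if v < w then f v w else 0) + (if w < v then f v w else 0))"
          using finF \<open>v \<in> F\<close> by (intro sum.mono_neutral_right) auto
        also have "\<dots> = (\<Sum>w\<in>F - {v}. f v w)"
          by (intro sum.cong refl) auto
        finally show "(\<Sum>w\<in>F - {v}. f v w) = (\<Sum>w\<in>F. (if v < w then f v w else 0) + (if w < v then f v w else 0))" by simp
      qed
      also have "\<dots> = (\<Sum>v\<in>F. \<Sum>w\<in>F. (if v < w then f v w else 0)) + (\<Sum>v\<in>F. \<Sum>w\<in>F. (if w < v then f v w else 0))"
        by (simp add: sum.distrib)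
      also have "(\<Sum>v\<in>F. \<Sum>w\<in>F. (if w < v then f v w else 0)) = (\<Sum>w\<in>F. \<Sum>v\<in>F. (if w < v then f v w else 0))"
        by (rule sum.swap)
      also have "\<dots> = (\<Sum>w\<in>F. \<Sum>v\<in>F. - (if w < v then f w v else 0))"
      proof (intro sum.cong refl)
        fix w v assume "w \<in> F" "v \<in> F"
        show "(if w < v then f v w else 0) = - (if w < v then f w v else 0)"
        proof (cases "w < v")
          case True
          have "w \<notin> \<rho>" "v \<notin> \<rho>" using \<open>w \<in> F\<close> \<open>v \<in> F\<close> by (auto simp: F_def)
          have e1: "ecount (insert w \<rho>) v = Suc (ecount \<rho> v)"
            using ecount_insert_less[OF fin True] \<open>w \<notin> \<rho>\<close> by simp
          have e2: "ecount (insert v \<rho>) w = ecount \<rho> w"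
            using ecount_insert_greater[OF True] by simp
          have "insert w (insert v \<rho>) = insert v (insert w \<rho>)" by auto
          then show ?thesis using True e1 e2 by (simp add: f_def sg_def algebra_simps)
        qed simp
      qed
      also have "(\<Sum>v\<in>F. \<Sum>w\<in>F. (if v < w then f v w else 0)) + \<dots> = 0"
        by (simp add: sum_negf)
      finally show ?thesis by simp
    qed
  qed
qed




definition FS :: "('v set \<Rightarrow> 'g::ab_group_add) set" where
  "FS = {c. finite (csupp c) \<and> (\<forall>\<sigma>\<in>csupp c. finite \<sigma>)}"

lemma fs_zero[simp]: "0 \<in> FS" by (simp add: FS_def)
lemma fs_add[simp]: "x \<in> FS \<Longrightarrow> y \<in> FS \<Longrightarrow> x + y \<in> FS"
  using csupp_add[of x y] unfolding FS_def by (auto intro: finite_subset)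
lemma fs_neg[simp]: "x \<in> FS \<Longrightarrow> - x \<in> FS" by (simp add: FS_def)
lemma fs_diff[simp]: "x \<in> FS \<Longrightarrow> y \<in> FS \<Longrightarrow> x - y \<in> FS"
  using fs_add[of x "- y"] by simp
lemma fs_bd[simp]: 
  assumes x: "x \<in> FS" shows "bd x \<in> FS"
proof -
  have f: "finite (csupp (bd x))" using x finite_csupp_bd by (auto simp: FS_def)
  have "finite \<tau>" if t: "\<tau> \<in> csupp (bd x)" for \<tau>
  proof -
    obtain v where "insert v \<tau> \<in> csupp x" using csupp_bd t by blast
    then have "finite (insert v \<tau>)" using x by (auto simp: FS_def)
    then show ?thesis by simp
  qed
  then show ?thesis using f by (simp add: FS_def)
qed

lemma bd_add_fs[simp]: "x \<in> FS \<Longrightarrow> y \<in> FS \<Longrightarrow> bd (x + y) = bd x + bd y"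
  by (rule bd_add) (auto simp: FS_def)
lemma bd_diff_fs[simp]: "x \<in> FS \<Longrightarrow> y \<in> FS \<Longrightarrow> bd (x - y) = bd x - bd y"
  by (rule bd_diff) (auto simp: FS_def)
lemma bd_bd_fs[simp]: "x \<in> FS \<Longrightarrow> bd (bd x) = 0"
  by (rule bd_bd) (auto simp: FS_def)
declare bd_neg[simp]

lemma G_fs: "c \<in> Gchains Q n \<Longrightarrow> c \<in> FS" by (auto simp: Gchains_def FS_def)
lemma G_zero[simp]: "0 \<in> Gchains Q n" by (simp add: Gchains_def)
lemma G_add: "(x::'a set \<Rightarrow> 'g::ab_group_add) \<in> Gchains Q n \<Longrightarrow> y \<in> Gchains Q n \<Longrightarrow> x + y \<in> Gchains Q n"
  using csupp_add[of x y] unfolding Gchains_def by (auto intro: finite_subset)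
lemma G_neg: "(x::'a set \<Rightarrow> 'g::ab_group_add) \<in> Gchains Q n \<Longrightarrow> - x \<in> Gchains Q n" by (simp add: Gchains_def)
lemma G_diff: "(x::'a set \<Rightarrow> 'g::ab_group_add) \<in> Gchains Q n \<Longrightarrow> y \<in> Gchains Q n \<Longrightarrow> x - y \<in> Gchains Q n"
  by (metis G_add G_neg diff_conv_add_uminus)
lemma G_mono: "Q \<subseteq> Y \<Longrightarrow> Gchains Q n \<subseteq> Gchains Y n" by (auto simp: Gchains_def)
lemma G_Int: "Gchains (Q \<inter> Y) n = Gchains Q n \<inter> Gchains Y n" by (auto simp: Gchains_def)

lemma bd_G:
  assumes c: "c \<in> Gchains Q n" and s: "csupp (bd c) \<subseteq> Y"
  shows "bd c \<in> Gchains Y (n - 1)"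
proof -
  have fs: "bd c \<in> FS" using G_fs[OF c] by simp
  have "\<tau> \<in> Y \<and> finite \<tau> \<and> \<tau> \<noteq> {} \<and> int (card \<tau>) = n - 1 + 1" if t: "\<tau> \<in> csupp (bd c)" for \<tau>
  proof -
    obtain v where v: "\<tau> \<noteq> {}" "v \<notin> \<tau>" "insert v \<tau> \<in> csupp c" using csupp_bd t by blast
    then have "finite (insert v \<tau>)" "int (card (insert v \<tau>)) = n + 1" using c by (auto simp: Gchains_def)
    then show ?thesis using v s t by auto
  qed
  then show ?thesis using fs by (auto simp: Gchains_def FS_def)
qed

lemma I_G: "c \<in> inf_chains Q n \<Longrightarrow> c \<in> Gchains Q n" by (simp add: inf_chains_def)
lemma I_fs: "c \<in> inf_chains Q n \<Longrightarrow> c \<in> FS" by (auto simp: inf_chains_def intro: G_fs)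
lemma I_zero[simp]: "0 \<in> inf_chains Q n" by (simp add: inf_chains_def)
lemma I_add: 
  assumes "x \<in> inf_chains Q n" "y \<in> inf_chains Q n" shows "x + y \<in> inf_chains Q n"
proof -
  have "x \<in> FS" "y \<in> FS" using assms by (auto simp: I_fs)
  then have "bd (x + y) = bd x + bd y" by simp
  then show ?thesis using assms by (simp add: inf_chains_def G_add)
qed
lemma I_neg: "x \<in> inf_chains Q n \<Longrightarrow> - x \<in> inf_chains Q n"
  by (simp add: inf_chains_def G_neg)
lemma I_diff: "x \<in> inf_chains Q n \<Longrightarrow> y \<in> inf_chains Q n \<Longrightarrow> x - y \<in> inf_chains Q n"
  by (metis I_add I_neg diff_conv_add_uminus)
lemma I_mono: 
  assumes "Q \<subseteq> Y" shows "inf_chains Q n \<subseteq> inf_chains Y n"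
  unfolding inf_chains_def using G_mono[OF assms, of n] G_mono[OF assms, of "n - 1"] by blast
lemma I_Int: "inf_chains (Q \<inter> Y) n = inf_chains Q n \<inter> inf_chains Y n"
  by (auto simp: inf_chains_def G_Int)
lemma I_bd: 
  assumes "c \<in> inf_chains Q n" shows "bd c \<in> inf_chains Q (n - 1)"
proof -
  have "c \<in> FS" using assms by (rule I_fs)
  then have "bd (bd c) = 0" by simp
  then show ?thesis using assms by (simp add: inf_chains_def)
qed

section \<open>Quotients\<close>

definition cls :: "('v set \<Rightarrow> 'g::ab_group_add) set \<Rightarrow> ('v set \<Rightarrow> 'g) \<Rightarrow> ('v set \<Rightarrow> 'g) set" where
  "cls T c = (\<lambda>h. h + c) ` T"

definition addsub :: "('v set \<Rightarrow> 'g::ab_group_add) set \<Rightarrow> bool" where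
  "addsub T \<longleftrightarrow> 0 \<in> T \<and> (\<forall>x\<in>T. \<forall>y\<in>T. x + y \<in> T) \<and> (\<forall>x\<in>T. - x \<in> T)"

lemma addsub_diff: "addsub T \<Longrightarrow> x \<in> T \<Longrightarrow> y \<in> T \<Longrightarrow> x - y \<in> T"
  unfolding addsub_def by (metis diff_conv_add_uminus)

lemma cls_eq_iff:
  assumes "addsub T" shows "cls T c = cls T d \<longleftrightarrow> c - d \<in> T"
proof
  assume "cls T c = cls T d"
  moreover have "c \<in> cls T c" using assms unfolding cls_def addsub_def by force
  ultimately obtain h where "h \<in> T" "c = h + d" unfolding cls_def by auto
  then show "c - d \<in> T" by simp
next
  assume h: "c - d \<in> T"
  show "cls T c = cls T d"
  proof
    show "cls T c \<subseteq> cls T d"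
    proof
      fix x assume "x \<in> cls T c"
      then obtain h where "h \<in> T" "x = h + c" by (auto simp: cls_def)
      moreover have "h + (c - d) \<in> T" using assms h \<open>h \<in> T\<close> by (simp add: addsub_def)
      ultimately show "x \<in> cls T d" unfolding cls_def
        by (intro image_eqI[of _ _ "h + (c - d)"]) auto
    qed
  next
    show "cls T d \<subseteq> cls T c"
    proof
      fix x assume "x \<in> cls T d"
      then obtain h where "h \<in> T" "x = h + d" by (auto simp: cls_def)
      moreover have "h - (c - d) \<in> T" using assms h \<open>h \<in> T\<close> by (simp add: addsub_diff)
      ultimately show "x \<in> cls T c" unfolding cls_def
        by (intro image_eqI[of _ _ "h - (c - d)"]) auto
    qed
  qed
qed

lemma cls_mem: "addsub T \<Longrightarrow> c \<in> cls T c"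
  unfolding cls_def addsub_def by force

lemma cls_sub: "addsub T \<Longrightarrow> addsub S \<Longrightarrow> T \<subseteq> S \<Longrightarrow> c \<in> S \<Longrightarrow> cls T c \<subseteq> S"
  unfolding cls_def addsub_def by auto

lemma cls_of_mem: "addsub T \<Longrightarrow> c \<in> T \<Longrightarrow> cls T c = T"
  using cls_eq_iff[of T c 0] by (simp add: cls_def addsub_def)

lemma cls_mult:
  assumes "addsub T"
  shows "set_mult (chain_monoid S) (cls T c) (cls T d) = cls T (c + d)"
proof -
  have "set_mult (chain_monoid S) (cls T c) (cls T d) = {x + y |x y. x \<in> cls T c \<and> y \<in> cls T d}"
    by (auto simp: set_mult_def chain_monoid_def cadd_eq)
  also have "\<dots> = cls T (c + d)"
  proof
    show "{x + y |x y. x \<in> cls T c \<and> y \<in> cls T d} \<subseteq> cls T (c + d)"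
    proof
      fix z assume "z \<in> {x + y |x y. x \<in> cls T c \<and> y \<in> cls T d}"
      then obtain h k where "h \<in> T" "k \<in> T" "z = (h + c) + (k + d)" by (auto simp: cls_def)
      moreover have "h + k \<in> T" using assms \<open>h \<in> T\<close> \<open>k \<in> T\<close> by (simp add: addsub_def)
      ultimately show "z \<in> cls T (c + d)" unfolding cls_def
        by (intro image_eqI[of _ _ "h + k"]) (auto simp: algebra_simps)
    qed
  next
    show "cls T (c + d) \<subseteq> {x + y |x y. x \<in> cls T c \<and> y \<in> cls T d}"
    proof
      fix z assume "z \<in> cls T (c + d)"
      then obtain h where "h \<in> T" "z = h + (c + d)" by (auto simp: cls_def)
      moreover have "h + c \<in> cls T c" "0 + d \<in> cls T d" using \<open>h \<in> T\<close> assms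
        by (auto simp: cls_def addsub_def)
      ultimately show "z \<in> {x + y |x y. x \<in> cls T c \<and> y \<in> cls T d}"
        by (metis (mono_tags, lifting) add.assoc add_0 mem_Collect_eq)
    qed
  qed
  finally show ?thesis .
qed

lemma carrier_rh: "carrier (rel_homology B A n) = cls (rel_bounds B A n) ` rel_cycles B A n"
  by (auto simp: rel_homology_def FactGroup_def RCOSETS_def r_coset_def chain_monoid_def cadd_eq cls_def)

lemma one_rh: "one (rel_homology B A n) = rel_bounds B A n"
  by (simp add: rel_homology_def FactGroup_def)

lemma mult_rh: 
  fixes c d :: "'v::linorder set \<Rightarrow> 'g::ab_group_add"
  assumes T: "addsub (rel_bounds B A n :: ('v set \<Rightarrow> 'g) set)"
  shows "cls (rel_bounds B A n) c \<otimes>\<^bsub>rel_homology B A n\<^esub> cls (rel_bounds B A n) d = cls (rel_bounds B A n) (c + d)"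
  unfolding rel_homology_def FactGroup_def monoid.simps by (rule cls_mult[OF T])

lemma RB_iff: "x \<in> rel_bounds B A n \<longleftrightarrow> (\<exists>d a. d \<in> inf_chains B (n+1) \<and> a \<in> inf_chains A n \<and> x = bd d + a)"
  unfolding rel_bounds_def cadd_eq by blast

lemma addsub_RB: "addsub (rel_bounds B A n :: ('v::linorder set \<Rightarrow> 'g::ab_group_add) set)"
proof -
  have "(0::'v set \<Rightarrow> 'g) \<in> rel_bounds B A n"
    unfolding rel_bounds_def by (rule CollectI, rule exI[of _ 0], rule exI[of _ 0]) (simp add: cadd_eq)
  moreover have "x + y \<in> rel_bounds B A n" if xR: "x \<in> rel_bounds B A n" and yR: "y \<in> rel_bounds B A n" for x y :: "'v set \<Rightarrow> 'g"
  proof -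
    obtain d a where da: "d \<in> inf_chains B (n+1)" "a \<in> inf_chains A n" "x = bd d + a"
      using xR unfolding RB_iff by blast
    obtain d' a' where da': "d' \<in> inf_chains B (n+1)" "a' \<in> inf_chains A n" "y = bd d' + a'"
      using yR unfolding RB_iff by blast
    have "d \<in> FS" "d' \<in> FS" using da(1) da'(1) by (auto simp: I_fs)
    then have "x + y = bd (d + d') + (a + a')" using da(3) da'(3) by (simp add: algebra_simps)
    then show ?thesis unfolding RB_iff using da da' by (meson I_add)
  qed
  moreover have "- x \<in> rel_bounds B A n" if xR: "x \<in> rel_bounds B A n" for x :: "'v set \<Rightarrow> 'g"
  proof -
    obtain d a where da: "d \<in> inf_chains B (n+1)" "a \<in> inf_chains A n" "x = bd d + a"
      using xR unfolding RB_iff by blast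
    then have "- x = bd (- d) + (- a)" by (simp add: algebra_simps)
    then show ?thesis unfolding RB_iff using da by (meson I_neg)
  qed
  ultimately show ?thesis by (simp add: addsub_def)
qed

lemma ZC_iff: "x \<in> rel_cycles B A n \<longleftrightarrow> x \<in> inf_chains B n \<and> bd x \<in> inf_chains A (n - 1)"
  unfolding rel_cycles_def by blast

lemma addsub_ZC: "addsub (rel_cycles B A n :: ('v::linorder set \<Rightarrow> 'g::ab_group_add) set)"
proof -
  have "x + y \<in> rel_cycles B A n" if "x \<in> rel_cycles B A n" "y \<in> rel_cycles B A n" for x y :: "'v set \<Rightarrow> 'g"
  proof -
    have "x \<in> FS" "y \<in> FS" using that by (auto simp: ZC_iff I_fs)
    then have "bd (x + y) = bd x + bd y" by simp
    then show ?thesis using that by (simp add: ZC_iff I_add)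
  qed
  moreover have "- x \<in> rel_cycles B A n" if "x \<in> rel_cycles B A n" for x :: "'v set \<Rightarrow> 'g"
    using that by (simp add: ZC_iff I_neg)
  moreover have "(0::'v set \<Rightarrow> 'g) \<in> rel_cycles B A n" by (simp add: ZC_iff)
  ultimately show ?thesis unfolding addsub_def by blast
qed

lemma RB_ZC: "A \<subseteq> B \<Longrightarrow> rel_bounds B A n \<subseteq> (rel_cycles B A n :: ('v::linorder set \<Rightarrow> 'g::ab_group_add) set)"
proof
  fix x assume AB: "A \<subseteq> B" and "x \<in> rel_bounds B A n"
  then obtain d a where da: "d \<in> inf_chains B (n+1)" "a \<in> inf_chains A n" "x = bd d + a"
    unfolding RB_iff by blast
  have "bd d \<in> inf_chains B n" using I_bd[OF da(1)] by simp
  moreover have "a \<in> inf_chains B n" using da(2) I_mono[OF AB] by blast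
  moreover have "bd x = bd a" using da by (simp add: I_fs)
  ultimately show "x \<in> rel_cycles B A n" using da I_bd[OF da(2)] by (simp add: ZC_iff I_add)
qed

lemma RB_mono: 
  assumes "B \<subseteq> B'" "A \<subseteq> A'" shows "rel_bounds B A n \<subseteq> rel_bounds B' A' n"
proof
  fix x assume "x \<in> rel_bounds B A n"
  then obtain d a where da: "d \<in> inf_chains B (n+1)" "a \<in> inf_chains A n" "x = bd d + a"
    unfolding RB_iff by blast
  have "d \<in> inf_chains B' (n+1)" using da(1) I_mono[OF assms(1)] by (rule subsetD[rotated])
  moreover have "a \<in> inf_chains A' n" using da(2) I_mono[OF assms(2)] by (rule subsetD[rotated])
  ultimately show "x \<in> rel_bounds B' A' n" unfolding RB_iff using da(3) by blast
qed

lemma ZC_mono: 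
  assumes "B \<subseteq> B'" "A \<subseteq> A'" shows "rel_cycles B A n \<subseteq> rel_cycles B' A' n"
proof
  fix x assume "x \<in> rel_cycles B A n"
  then have "x \<in> inf_chains B n" "bd x \<in> inf_chains A (n - 1)" unfolding ZC_iff by blast+
  then show "x \<in> rel_cycles B' A' n" unfolding ZC_iff
    using I_mono[OF assms(1), of n] I_mono[OF assms(2), of "n - 1"] by blast
qed

lemma inv_rh:
  fixes c :: "'v::linorder set \<Rightarrow> 'g::ab_group_add"
  assumes AB: "A \<subseteq> B" and c: "c \<in> rel_cycles B A n"
  shows "inv\<^bsub>rel_homology B A n\<^esub> (cls (rel_bounds B A n) c) = cls (rel_bounds B A n) (- c)"
proof -
  let ?T = "rel_bounds B A n :: ('v set \<Rightarrow> 'g) set" and ?G = "rel_homology B A n :: ('v set \<Rightarrow> 'g) set monoid"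
  have T: "addsub ?T" by (rule addsub_RB)
  have mc: "- c \<in> rel_cycles B A n" using addsub_ZC[of B A n] c unfolding addsub_def by blast
  have z0: "0 \<in> ?T" using T by (simp add: addsub_def)
  have one: "cls ?T 0 = one ?G" using cls_of_mem[OF T z0] by (simp add: one_rh)
  show ?thesis unfolding m_inv_def
  proof (rule the_equality)
    show "cls ?T (- c) \<in> carrier ?G \<and> cls ?T c \<otimes>\<^bsub>?G\<^esub> cls ?T (- c) = one ?G \<and>
          cls ?T (- c) \<otimes>\<^bsub>?G\<^esub> cls ?T c = one ?G"
      using mc one by (simp add: carrier_rh mult_rh[OF T])
  next
    fix y assume y: "y \<in> carrier ?G \<and> cls ?T c \<otimes>\<^bsub>?G\<^esub> y = one ?G \<and> y \<otimes>\<^bsub>?G\<^esub> cls ?T c = one ?G"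
    then obtain d where d: "y = cls ?T d" by (auto simp: carrier_rh)
    then have "cls ?T (c + d) = cls ?T 0" using y one by (simp add: mult_rh[OF T])
    then have "c + d \<in> ?T" using cls_eq_iff[OF T] by simp
    then have "d - (- c) \<in> ?T" by (simp add: algebra_simps)
    then show "y = cls ?T (- c)" using d cls_eq_iff[OF T] by simp
  qed
qed

lemma induced_cls:
  fixes c :: "'v::linorder set \<Rightarrow> 'g::ab_group_add"
  assumes "B \<subseteq> B'" "A \<subseteq> A'"
  shows "induced B' A' n (cls (rel_bounds B A n) c) = cls (rel_bounds B' A' n) c"
proof -
  let ?T = "rel_bounds B A n :: ('v set \<Rightarrow> 'g) set" and ?T' = "rel_bounds B' A' n :: ('v set \<Rightarrow> 'g) set"
  have "\<exists>c0. c0 \<in> cls ?T c" using cls_mem[OF addsub_RB] by blast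
  then have "(SOME c0. c0 \<in> cls ?T c) \<in> cls ?T c" by (rule someI_ex)
  then obtain h where h: "h \<in> ?T" "(SOME c0. c0 \<in> cls ?T c) = h + c" by (auto simp: cls_def)
  have "h \<in> ?T'" using h RB_mono[OF assms] by blast
  then have "(h + c) - c \<in> ?T'" by simp
  then have "cls ?T' (h + c) = cls ?T' c" using cls_eq_iff[OF addsub_RB] by blast
  then show ?thesis using h by (simp add: induced_def cls_def cadd_eq)
qed




definition conndata :: "'v::linorder set set \<Rightarrow> 'v set set \<Rightarrow> 'v set set \<Rightarrow> 'v set set \<Rightarrow> int
   \<Rightarrow> ('v set \<Rightarrow> 'g::ab_group_add) \<Rightarrow> ('v set \<Rightarrow> 'g) \<Rightarrow> ('v set \<Rightarrow> 'g) \<Rightarrow> ('v set \<Rightarrow> 'g) \<Rightarrow> ('v set \<Rightarrow> 'g) \<Rightarrow> bool" where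
 "conndata B1 A1 B2 A2 n z x y a1 a2 \<longleftrightarrow> x \<in> inf_chains B1 n \<and> y \<in> inf_chains B2 n \<and> z = x + y \<and>
    a1 \<in> inf_chains A1 (n - 1) \<and> a2 \<in> inf_chains A2 (n - 1) \<and> bd z = a1 + a2"

definition conn :: "'v::linorder set set \<Rightarrow> 'v set set \<Rightarrow> 'v set set \<Rightarrow> 'v set set \<Rightarrow> int
   \<Rightarrow> ('v set \<Rightarrow> 'g::ab_group_add) set \<Rightarrow> ('v set \<Rightarrow> 'g) set" where
 "conn B1 A1 B2 A2 n Q = cls (rel_bounds (B1 \<inter> B2) (A1 \<inter> A2) (n - 1))
    (SOME w. \<exists>z x y a1 a2. z \<in> Q \<and> conndata B1 A1 B2 A2 n z x y a1 a2 \<and> w = bd x - a1)"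

definition decomp :: "'g::ab_group_add itself \<Rightarrow> 'v::linorder set set \<Rightarrow> 'v set set \<Rightarrow> bool" where
 "decomp _ Q Y \<longleftrightarrow> (\<forall>n (c::'v set \<Rightarrow> 'g). c \<in> inf_chains (Q \<union> Y) n \<longrightarrow>
     (\<exists>x y. x \<in> inf_chains Q n \<and> y \<in> inf_chains Y n \<and> c = x + y))"

lemma ab_swap:
  assumes h: "(p::'a::ab_group_add) + q = r + s" shows "p - r = s - q"
proof -
  have "p - r = (p + q) - r - q" by (simp add: algebra_simps)
  also have "\<dots> = (r + s) - r - q" using h by simp
  also have "\<dots> = s - q" by (simp add: algebra_simps)
  finally show ?thesis .
qed

lemma carrier_E:
  assumes "Q \<in> carrier (rel_homology B A n)"
  obtains c where "c \<in> rel_cycles B A n" "Q = cls (rel_bounds B A n) c"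
  using assms by (auto simp: carrier_rh)

lemma cls_carrier: "c \<in> rel_cycles B A n \<Longrightarrow> cls (rel_bounds B A n) c \<in> carrier (rel_homology B A n)"
  by (simp add: carrier_rh)

lemma cls_eq_one: "addsub T \<Longrightarrow> cls T c = T \<longleftrightarrow> c \<in> T"
  using cls_eq_iff[of T c 0] cls_of_mem[of T 0] by (simp add: addsub_def)

lemma RB_eq_iff: "cls (rel_bounds B A n) c = cls (rel_bounds B A n) d \<longleftrightarrow> c - d \<in> rel_bounds B A n"
  by (rule cls_eq_iff[OF addsub_RB])

lemma RB_one_iff: "cls (rel_bounds B A n) c = one (rel_homology B A n) \<longleftrightarrow> c \<in> rel_bounds B A n"
  by (simp add: one_rh cls_eq_one[OF addsub_RB])

lemma RB_zero: "(0::'v::linorder set \<Rightarrow> 'g::ab_group_add) \<in> rel_bounds B A n"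
  using addsub_RB[of B A n] unfolding addsub_def by blast

lemma ZC_add: "x \<in> rel_cycles B A n \<Longrightarrow> y \<in> rel_cycles B A n \<Longrightarrow> x + (y::'v::linorder set \<Rightarrow> 'g::ab_group_add) \<in> rel_cycles B A n"
  using addsub_ZC[of B A n] unfolding addsub_def by blast

lemma RB_eqI: "c - d \<in> rel_bounds B A n \<Longrightarrow> cls (rel_bounds B A n) c = cls (rel_bounds B A n) (d::'v::linorder set \<Rightarrow> 'g::ab_group_add)"
  using cls_eq_iff[OF addsub_RB, of B A n c d] by blast

locale mv =
  fixes gty :: "'g::ab_group_add itself" and B1 A1 B2 A2 :: "'v::linorder set set"
  assumes A1B1: "A1 \<subseteq> B1" and A2B2: "A2 \<subseteq> B2"
    and dB: "decomp gty B1 B2" and dA: "decomp gty A1 A2"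
begin

lemma decB: "(c::'v set \<Rightarrow> 'g) \<in> inf_chains (B1 \<union> B2) n \<Longrightarrow>
   \<exists>x y. x \<in> inf_chains B1 n \<and> y \<in> inf_chains B2 n \<and> c = x + y"
  using dB by (simp add: decomp_def)
lemma decA: "(c::'v set \<Rightarrow> 'g) \<in> inf_chains (A1 \<union> A2) n \<Longrightarrow>
   \<exists>x y. x \<in> inf_chains A1 n \<and> y \<in> inf_chains A2 n \<and> c = x + y"
  using dA by (simp add: decomp_def)

lemma IA1: "c \<in> inf_chains A1 n \<Longrightarrow> c \<in> inf_chains B1 n" using I_mono[OF A1B1] by blast
lemma IA2: "c \<in> inf_chains A2 n \<Longrightarrow> c \<in> inf_chains B2 n" using I_mono[OF A2B2] by blast
lemma AiBi: "A1 \<inter> A2 \<subseteq> B1 \<inter> B2" using A1B1 A2B2 by blast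
lemma AuBu: "A1 \<union> A2 \<subseteq> B1 \<union> B2" using A1B1 A2B2 by blast

lemma conndata_exists:
  assumes "(z::'v set \<Rightarrow> 'g) \<in> rel_cycles (B1 \<union> B2) (A1 \<union> A2) n"
  shows "\<exists>x y a1 a2. conndata B1 A1 B2 A2 n z x y a1 a2"
proof -
  have zz: "z \<in> inf_chains (B1 \<union> B2) n" "bd z \<in> inf_chains (A1 \<union> A2) (n - 1)" using assms by (auto simp: ZC_iff)
  obtain x y where "x \<in> inf_chains B1 n" "y \<in> inf_chains B2 n" "z = x + y"
    using decB[OF zz(1)] by blast
  moreover obtain a1 a2 where "a1 \<in> inf_chains A1 (n - 1)" "a2 \<in> inf_chains A2 (n - 1)" "bd z = a1 + a2"
    using decA[OF zz(2)] by blast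
  ultimately show ?thesis unfolding conndata_def by blast
qed

lemma conndata_bd:
  assumes "conndata B1 A1 B2 A2 n z x y a1 a2"
  shows "bd x + bd y = a1 + (a2::'v set \<Rightarrow> 'g)"
  using assms unfolding conndata_def by (auto simp: I_fs)

lemma conn_w:
  assumes d: "conndata B1 A1 B2 A2 n z x y a1 (a2::'v set \<Rightarrow> 'g)"
  shows "bd x - a1 \<in> rel_cycles (B1 \<inter> B2) (A1 \<inter> A2) (n - 1)"
proof -
  have x: "x \<in> inf_chains B1 n" and y: "y \<in> inf_chains B2 n" and a1: "a1 \<in> inf_chains A1 (n - 1)"
    and a2: "a2 \<in> inf_chains A2 (n - 1)" using d by (auto simp: conndata_def)
  have eq: "bd x - a1 = a2 - bd y" using conndata_bd[OF d]
    by (metis add_diff_cancel_left' add_diff_cancel_right' diff_diff_eq2 add.commute)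
  have "bd x - a1 \<in> inf_chains B1 (n - 1)" using I_bd[OF x] IA1[OF a1] by (simp add: I_diff)
  moreover have "a2 - bd y \<in> inf_chains B2 (n - 1)" using I_bd[OF y] IA2[OF a2] by (simp add: I_diff)
  moreover have "bd (bd x - a1) = - bd a1" using x a1 by (simp add: I_fs)
  moreover have "bd (a2 - bd y) = bd a2" using y a2 by (simp add: I_fs)
  ultimately show ?thesis using eq I_bd[OF a1] I_bd[OF a2]
    by (simp add: ZC_iff I_Int I_neg)
qed

lemma conn_welldef:
  assumes d: "conndata B1 A1 B2 A2 n z x y a1 (a2::'v set \<Rightarrow> 'g)"
    and d': "conndata B1 A1 B2 A2 n z' x' y' a1' a2'"
    and zz: "z - z' \<in> rel_bounds (B1 \<union> B2) (A1 \<union> A2) n"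
  shows "(bd x - a1) - (bd x' - a1') \<in> rel_bounds (B1 \<inter> B2) (A1 \<inter> A2) (n - 1)"
proof -
  obtain dd a where da: "dd \<in> inf_chains (B1 \<union> B2) (n + 1)" "a \<in> inf_chains (A1 \<union> A2) n" "z - z' = bd dd + a"
    using zz RB_iff by blast
  obtain d1 d2 where d12: "d1 \<in> inf_chains B1 (n + 1)" "d2 \<in> inf_chains B2 (n + 1)" "dd = d1 + d2"
    using decB[OF da(1)] by blast
  obtain e1 e2 where e12: "e1 \<in> inf_chains A1 n" "e2 \<in> inf_chains A2 n" "a = e1 + e2"
    using decA[OF da(2)] by blast
  have x: "x \<in> inf_chains B1 n" and y: "y \<in> inf_chains B2 n" and a1: "a1 \<in> inf_chains A1 (n - 1)"
    and a2: "a2 \<in> inf_chains A2 (n - 1)" and z: "z = x + y" using d by (auto simp: conndata_def)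
  have x': "x' \<in> inf_chains B1 n" and y': "y' \<in> inf_chains B2 n" and a1': "a1' \<in> inf_chains A1 (n - 1)"
    and a2': "a2' \<in> inf_chains A2 (n - 1)" and z': "z' = x' + y'" using d' by (auto simp: conndata_def)
  have fs: "x \<in> FS" "y \<in> FS" "x' \<in> FS" "y' \<in> FS" "a1 \<in> FS" "a2 \<in> FS" "a1' \<in> FS" "a2' \<in> FS"
     "d1 \<in> FS" "d2 \<in> FS" "e1 \<in> FS" "e2 \<in> FS"
    using x y x' y' a1 a2 a1' a2' d12 e12 by (auto simp: I_fs)
  have bz: "bd x + bd y = a1 + a2" using conndata_bd[OF d] .
  have bz': "bd x' + bd y' = a1' + a2'" using conndata_bd[OF d'] .
  have sum: "x + y - (x' + y') = bd d1 + bd d2 + (e1 + e2)"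
    using da(3) d12(3) e12(3) z z' fs by simp
  define u where "u = x - x' - bd d1 - e1"
  have u2: "u = - (y - y' - bd d2 - e2)"
    using sum unfolding u_def by (simp add: algebra_simps)
  have bd1: "bd d1 \<in> inf_chains B1 n" using I_bd[OF d12(1)] by simp
  have bd2: "bd d2 \<in> inf_chains B2 n" using I_bd[OF d12(2)] by simp
  have "u \<in> inf_chains B1 n" unfolding u_def using x x' bd1 IA1[OF e12(1)] by (simp add: I_diff)
  moreover have "u \<in> inf_chains B2 n" unfolding u2 using y y' bd2 IA2[OF e12(2)] by (simp add: I_diff I_neg)
  ultimately have ui: "u \<in> inf_chains (B1 \<inter> B2) (n - 1 + 1)" by (simp add: I_Int)
  define e where "e = (bd x - a1) - (bd x' - a1') - bd u"
  have bu1: "bd u = bd x - bd x' - bd e1" unfolding u_def using fs by simp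
  have bu2: "bd u = - (bd y - bd y' - bd e2)" unfolding u2 using fs by simp
  have "e = bd e1 - a1 + a1'" unfolding e_def bu1 by (simp add: algebra_simps)
  then have eA1: "e \<in> inf_chains A1 (n - 1)" using I_bd[OF e12(1)] a1 a1' by (simp add: I_add I_diff)
  have "e = (bd x + bd y) - (bd x' + bd y') - a1 + a1' - bd e2" unfolding e_def bu2 by (simp add: algebra_simps)
  also have "\<dots> = a2 - a2' - bd e2" unfolding bz bz' by (simp add: algebra_simps)
  finally have eA2: "e \<in> inf_chains A2 (n - 1)" using I_bd[OF e12(2)] a2 a2' by (simp add: I_diff)
  have "(bd x - a1) - (bd x' - a1') = bd u + e" unfolding e_def by simp
  then show ?thesis using ui eA1 eA2 unfolding RB_iff I_Int by blast
qed

lemma conn_eq: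
  assumes zc: "(z::'v set \<Rightarrow> 'g) \<in> rel_cycles (B1 \<union> B2) (A1 \<union> A2) n"
    and d: "conndata B1 A1 B2 A2 n z x y a1 a2"
  shows "conn B1 A1 B2 A2 n (cls (rel_bounds (B1 \<union> B2) (A1 \<union> A2) n) z)
       = cls (rel_bounds (B1 \<inter> B2) (A1 \<inter> A2) (n - 1)) (bd x - a1)"
proof -
  let ?T = "rel_bounds (B1 \<union> B2) (A1 \<union> A2) n"
  let ?P = "\<lambda>w. \<exists>z0 x y a1 a2. z0 \<in> cls ?T z \<and> conndata B1 A1 B2 A2 n z0 x y a1 a2 \<and> w = bd x - a1"
  have "?P (bd x - a1)" using d cls_mem[OF addsub_RB] by blast
  then have ex: "\<exists>w. ?P w" by blast
  have "?P (SOME w. ?P w)" by (rule someI_ex[of ?P, OF ex])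
  then obtain z' x' y' a1' a2' where p: "z' \<in> cls ?T z" "conndata B1 A1 B2 A2 n z' x' y' a1' a2'"
    "(SOME w. ?P w) = bd x' - a1'" by blast
  have "z' - z \<in> ?T" using p(1) by (auto simp: cls_def)
  then have "(bd x' - a1') - (bd x - a1) \<in> rel_bounds (B1 \<inter> B2) (A1 \<inter> A2) (n - 1)"
    using conn_welldef[OF p(2) d] by simp
  then show ?thesis unfolding conn_def p(3) by (rule RB_eqI)
qed

end


context mv
begin

lemma ZCi_1: "c \<in> rel_cycles (B1 \<inter> B2) (A1 \<inter> A2) n \<Longrightarrow> c \<in> rel_cycles B1 A1 n"
  using ZC_mono[of "B1 \<inter> B2" B1 "A1 \<inter> A2" A1] by blast
lemma ZCi_2: "c \<in> rel_cycles (B1 \<inter> B2) (A1 \<inter> A2) n \<Longrightarrow> c \<in> rel_cycles B2 A2 n"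
  using ZC_mono[of "B1 \<inter> B2" B2 "A1 \<inter> A2" A2] by blast
lemma ZC1_u: "c \<in> rel_cycles B1 A1 n \<Longrightarrow> c \<in> rel_cycles (B1 \<union> B2) (A1 \<union> A2) n"
  using ZC_mono[of B1 "B1 \<union> B2" A1 "A1 \<union> A2"] by blast
lemma ZC2_u: "c \<in> rel_cycles B2 A2 n \<Longrightarrow> c \<in> rel_cycles (B1 \<union> B2) (A1 \<union> A2) n"
  using ZC_mono[of B2 "B1 \<union> B2" A2 "A1 \<union> A2"] by blast

lemma mvf_cls:
  "mv_f B1 A1 B2 A2 n (cls (rel_bounds (B1 \<inter> B2) (A1 \<inter> A2) n) (c::'v set \<Rightarrow> 'g))
     = (cls (rel_bounds B1 A1 n) c, cls (rel_bounds B2 A2 n) c)"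
  by (simp add: mv_f_def induced_cls)

lemma mvg_cls:
  assumes "(x::'v set \<Rightarrow> 'g) \<in> rel_cycles B1 A1 n" "y \<in> rel_cycles B2 A2 n"
  shows "mv_g B1 A1 B2 A2 n (cls (rel_bounds B1 A1 n) x, cls (rel_bounds B2 A2 n) y)
     = cls (rel_bounds (B1 \<union> B2) (A1 \<union> A2) n) (x - y)"
proof -
  have "induced (B1 \<union> B2) (A1 \<union> A2) n (cls (rel_bounds B1 A1 n) x) = cls (rel_bounds (B1 \<union> B2) (A1 \<union> A2) n) x"
    by (rule induced_cls) auto
  moreover have "induced (B1 \<union> B2) (A1 \<union> A2) n (cls (rel_bounds B2 A2 n) y) = cls (rel_bounds (B1 \<union> B2) (A1 \<union> A2) n) y"
    by (rule induced_cls) auto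
  ultimately show ?thesis unfolding mv_g_def using inv_rh[OF AuBu ZC2_u[OF assms(2)]]
    by (simp add: mult_rh[OF addsub_RB])
qed

lemma conndata_add:
  assumes "conndata B1 A1 B2 A2 n z x y a1 (a2::'v set \<Rightarrow> 'g)"
    and "conndata B1 A1 B2 A2 n z' x' y' a1' a2'"
  shows "conndata B1 A1 B2 A2 n (z + z') (x + x') (y + y') (a1 + a1') (a2 + a2')"
proof -
  have "z \<in> FS" "z' \<in> FS" using assms by (auto simp: conndata_def I_fs)
  then have "bd (z + z') = bd z + bd z'" by simp
  also have "\<dots> = (a1 + a2) + (a1' + a2')" using assms unfolding conndata_def by metis
  also have "\<dots> = (a1 + a1') + (a2 + a2')" by (simp add: algebra_simps)
  finally have b: "bd (z + z') = (a1 + a1') + (a2 + a2')" .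
  have "z + z' = (x + y) + (x' + y')" using assms unfolding conndata_def by metis
  also have "\<dots> = (x + x') + (y + y')" by (simp add: algebra_simps)
  finally have zz: "z + z' = (x + x') + (y + y')" .
  show ?thesis using assms b zz unfolding conndata_def by (meson I_add)
qed

lemma hom_f: "(mv_f B1 A1 B2 A2 n :: ('v set \<Rightarrow> 'g) set \<Rightarrow> _) \<in> hom (rel_homology (B1 \<inter> B2) (A1 \<inter> A2) n)
                                (rel_homology B1 A1 n \<times>\<times> rel_homology B2 A2 n)"
  unfolding hom_def
proof (intro CollectI conjI ballI Pi_I)
  fix Q :: "('v set \<Rightarrow> 'g) set" assume "Q \<in> carrier (rel_homology (B1 \<inter> B2) (A1 \<inter> A2) n)"
  then obtain c where c: "c \<in> rel_cycles (B1 \<inter> B2) (A1 \<inter> A2) n" "Q = cls (rel_bounds (B1 \<inter> B2) (A1 \<inter> A2) n) c"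
    by (rule carrier_E)
  show "mv_f B1 A1 B2 A2 n Q \<in> carrier (rel_homology B1 A1 n \<times>\<times> rel_homology B2 A2 n)"
    using c by (simp add: mvf_cls DirProd_def cls_carrier ZCi_1 ZCi_2)
next
  fix Q Y :: "('v set \<Rightarrow> 'g) set" assume "Q \<in> carrier (rel_homology (B1 \<inter> B2) (A1 \<inter> A2) n)" "Y \<in> carrier (rel_homology (B1 \<inter> B2) (A1 \<inter> A2) n)"
  then obtain c d where c: "c \<in> rel_cycles (B1 \<inter> B2) (A1 \<inter> A2) n" "Q = cls (rel_bounds (B1 \<inter> B2) (A1 \<inter> A2) n) c"
    and d: "d \<in> rel_cycles (B1 \<inter> B2) (A1 \<inter> A2) n" "Y = cls (rel_bounds (B1 \<inter> B2) (A1 \<inter> A2) n) d"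
    by (metis carrier_E)
  show "mv_f B1 A1 B2 A2 n (Q \<otimes>\<^bsub>rel_homology (B1 \<inter> B2) (A1 \<inter> A2) n\<^esub> Y) =
        mv_f B1 A1 B2 A2 n Q \<otimes>\<^bsub>rel_homology B1 A1 n \<times>\<times> rel_homology B2 A2 n\<^esub> mv_f B1 A1 B2 A2 n Y"
    using c d by (simp add: mvf_cls DirProd_def mult_rh[OF addsub_RB])
qed

lemma hom_g: "(mv_g B1 A1 B2 A2 n :: _ \<Rightarrow> ('v set \<Rightarrow> 'g) set) \<in> hom (rel_homology B1 A1 n \<times>\<times> rel_homology B2 A2 n)
                                (rel_homology (B1 \<union> B2) (A1 \<union> A2) n)"
  unfolding hom_def
proof (intro CollectI conjI ballI Pi_I)
  fix Q :: "('v set \<Rightarrow> 'g) set \<times> ('v set \<Rightarrow> 'g) set" assume "Q \<in> carrier (rel_homology B1 A1 n \<times>\<times> rel_homology B2 A2 n)"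
  then obtain x y where x: "x \<in> rel_cycles B1 A1 n" and y: "y \<in> rel_cycles B2 A2 n"
    and Q: "Q = (cls (rel_bounds B1 A1 n) x, cls (rel_bounds B2 A2 n) y)"
    by (auto simp: DirProd_def carrier_rh)
  have "x - y \<in> rel_cycles (B1 \<union> B2) (A1 \<union> A2) n"
    using addsub_diff[OF addsub_ZC ZC1_u[OF x] ZC2_u[OF y]] .
  then show "mv_g B1 A1 B2 A2 n Q \<in> carrier (rel_homology (B1 \<union> B2) (A1 \<union> A2) n)"
    using Q mvg_cls[OF x y] by (simp add: cls_carrier)
next
  fix Q Y :: "('v set \<Rightarrow> 'g) set \<times> ('v set \<Rightarrow> 'g) set" assume "Q \<in> carrier (rel_homology B1 A1 n \<times>\<times> rel_homology B2 A2 n)" 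
    "Y \<in> carrier (rel_homology B1 A1 n \<times>\<times> rel_homology B2 A2 n)"
  then obtain x y x' y' where x: "x \<in> rel_cycles B1 A1 n" and y: "y \<in> rel_cycles B2 A2 n"
    and Q: "Q = (cls (rel_bounds B1 A1 n) x, cls (rel_bounds B2 A2 n) y)"
    and x': "x' \<in> rel_cycles B1 A1 n" and y': "y' \<in> rel_cycles B2 A2 n"
    and Y: "Y = (cls (rel_bounds B1 A1 n) x', cls (rel_bounds B2 A2 n) y')"
    by (auto simp: DirProd_def carrier_rh)
  have xx: "x + x' \<in> rel_cycles B1 A1 n" "y + y' \<in> rel_cycles B2 A2 n"
    using x y x' y' by (auto intro: ZC_add)
  have "Q \<otimes>\<^bsub>rel_homology B1 A1 n \<times>\<times> rel_homology B2 A2 n\<^esub> Y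
      = (cls (rel_bounds B1 A1 n) (x + x'), cls (rel_bounds B2 A2 n) (y + y'))"
    using Q Y by (simp add: DirProd_def mult_rh[OF addsub_RB])
  then show "mv_g B1 A1 B2 A2 n (Q \<otimes>\<^bsub>rel_homology B1 A1 n \<times>\<times> rel_homology B2 A2 n\<^esub> Y) =
        mv_g B1 A1 B2 A2 n Q \<otimes>\<^bsub>rel_homology (B1 \<union> B2) (A1 \<union> A2) n\<^esub> mv_g B1 A1 B2 A2 n Y"
    using Q Y mvg_cls[OF x y] mvg_cls[OF x' y'] mvg_cls[OF xx]
    by (simp add: mult_rh[OF addsub_RB] algebra_simps)
qed

lemma hom_conn: "(conn B1 A1 B2 A2 n :: ('v set \<Rightarrow> 'g) set \<Rightarrow> _) \<in> hom (rel_homology (B1 \<union> B2) (A1 \<union> A2) n)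
                     (rel_homology (B1 \<inter> B2) (A1 \<inter> A2) (n - 1))"
  unfolding hom_def
proof (intro CollectI conjI ballI Pi_I)
  fix Q :: "('v set \<Rightarrow> 'g) set" assume "Q \<in> carrier (rel_homology (B1 \<union> B2) (A1 \<union> A2) n)"
  then obtain z where z: "z \<in> rel_cycles (B1 \<union> B2) (A1 \<union> A2) n" "Q = cls (rel_bounds (B1 \<union> B2) (A1 \<union> A2) n) z"
    by (rule carrier_E)
  obtain x y a1 a2 where d: "conndata B1 A1 B2 A2 n z x y a1 a2" using conndata_exists[OF z(1)] by blast
  show "conn B1 A1 B2 A2 n Q \<in> carrier (rel_homology (B1 \<inter> B2) (A1 \<inter> A2) (n - 1))"
    using z conn_eq[OF z(1) d] conn_w[OF d] by (simp add: cls_carrier)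
next
  fix Q Y :: "('v set \<Rightarrow> 'g) set" assume "Q \<in> carrier (rel_homology (B1 \<union> B2) (A1 \<union> A2) n)" "Y \<in> carrier (rel_homology (B1 \<union> B2) (A1 \<union> A2) n)"
  then obtain z z' where z: "z \<in> rel_cycles (B1 \<union> B2) (A1 \<union> A2) n" "Q = cls (rel_bounds (B1 \<union> B2) (A1 \<union> A2) n) z"
    and z': "z' \<in> rel_cycles (B1 \<union> B2) (A1 \<union> A2) n" "Y = cls (rel_bounds (B1 \<union> B2) (A1 \<union> A2) n) z'"
    by (metis carrier_E)
  obtain x y a1 a2 where d: "conndata B1 A1 B2 A2 n z x y a1 a2" using conndata_exists[OF z(1)] by blast
  obtain x' y' a1' a2' where d': "conndata B1 A1 B2 A2 n z' x' y' a1' a2'" using conndata_exists[OF z'(1)] by blast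
  have zz: "z + z' \<in> rel_cycles (B1 \<union> B2) (A1 \<union> A2) n" by (rule ZC_add[OF z(1) z'(1)])
  have e: "bd (x + x') - (a1 + a1') = (bd x - a1) + (bd x' - a1')"
    using d d' by (auto simp: conndata_def I_fs algebra_simps)
  show "conn B1 A1 B2 A2 n (Q \<otimes>\<^bsub>rel_homology (B1 \<union> B2) (A1 \<union> A2) n\<^esub> Y) =
        conn B1 A1 B2 A2 n Q \<otimes>\<^bsub>rel_homology (B1 \<inter> B2) (A1 \<inter> A2) (n - 1)\<^esub> conn B1 A1 B2 A2 n Y"
    using z z' conn_eq[OF z(1) d] conn_eq[OF z'(1) d'] conn_eq[OF zz conndata_add[OF d d']] e
    by (simp add: mult_rh[OF addsub_RB])
qed


lemma exact1:
  "(mv_f B1 A1 B2 A2 n :: ('v set \<Rightarrow> 'g) set \<Rightarrow> _) ` carrier (rel_homology (B1 \<inter> B2) (A1 \<inter> A2) n)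
    = kernel (rel_homology B1 A1 n \<times>\<times> rel_homology B2 A2 n)
             (rel_homology (B1 \<union> B2) (A1 \<union> A2) n) (mv_g B1 A1 B2 A2 n)"
proof
  show "(mv_f B1 A1 B2 A2 n :: ('v set \<Rightarrow> 'g) set \<Rightarrow> _) ` carrier (rel_homology (B1 \<inter> B2) (A1 \<inter> A2) n)
    \<subseteq> kernel (rel_homology B1 A1 n \<times>\<times> rel_homology B2 A2 n)
             (rel_homology (B1 \<union> B2) (A1 \<union> A2) n) (mv_g B1 A1 B2 A2 n)"
  proof
    fix Y :: "('v set \<Rightarrow> 'g) set \<times> ('v set \<Rightarrow> 'g) set" assume "Y \<in> (mv_f B1 A1 B2 A2 n :: ('v set \<Rightarrow> 'g) set \<Rightarrow> _) ` carrier (rel_homology (B1 \<inter> B2) (A1 \<inter> A2) n)"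
    then obtain c where c: "c \<in> rel_cycles (B1 \<inter> B2) (A1 \<inter> A2) n"
      and Y: "Y = mv_f B1 A1 B2 A2 n (cls (rel_bounds (B1 \<inter> B2) (A1 \<inter> A2) n) c)"
      by (auto simp: carrier_rh)
    have "(0::'v set \<Rightarrow> 'g) \<in> rel_bounds (B1 \<union> B2) (A1 \<union> A2) n" by (rule RB_zero)
    then show "Y \<in> kernel (rel_homology B1 A1 n \<times>\<times> rel_homology B2 A2 n)
             (rel_homology (B1 \<union> B2) (A1 \<union> A2) n) (mv_g B1 A1 B2 A2 n)"
      using c Y by (simp add: kernel_def mvf_cls mvg_cls ZCi_1 ZCi_2 DirProd_def cls_carrier RB_one_iff)
  qed
next
  show "kernel (rel_homology B1 A1 n \<times>\<times> rel_homology B2 A2 n)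
             (rel_homology (B1 \<union> B2) (A1 \<union> A2) n) (mv_g B1 A1 B2 A2 n)
     \<subseteq> (mv_f B1 A1 B2 A2 n :: ('v set \<Rightarrow> 'g) set \<Rightarrow> _) ` carrier (rel_homology (B1 \<inter> B2) (A1 \<inter> A2) n)"
  proof
    fix Y :: "('v set \<Rightarrow> 'g) set \<times> ('v set \<Rightarrow> 'g) set" assume Yk: "Y \<in> kernel (rel_homology B1 A1 n \<times>\<times> rel_homology B2 A2 n)
             (rel_homology (B1 \<union> B2) (A1 \<union> A2) n) (mv_g B1 A1 B2 A2 n)"
    then obtain x y where x: "(x::'v set \<Rightarrow> 'g) \<in> rel_cycles B1 A1 n" and y: "y \<in> rel_cycles B2 A2 n"
      and Y: "Y = (cls (rel_bounds B1 A1 n) x, cls (rel_bounds B2 A2 n) y)"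
      by (auto simp: kernel_def DirProd_def carrier_rh)
    have "x - y \<in> rel_bounds (B1 \<union> B2) (A1 \<union> A2) n"
      using Yk Y mvg_cls[OF x y] by (simp add: kernel_def RB_one_iff)
    then obtain dd a where da: "dd \<in> inf_chains (B1 \<union> B2) (n + 1)" "a \<in> inf_chains (A1 \<union> A2) n"
      "x - y = bd dd + a" unfolding RB_iff by blast
    obtain d1 d2 where d12: "d1 \<in> inf_chains B1 (n + 1)" "d2 \<in> inf_chains B2 (n + 1)" "dd = d1 + d2"
      using decB[OF da(1)] by blast
    obtain a1 a2 where a12: "a1 \<in> inf_chains A1 n" "a2 \<in> inf_chains A2 n" "a = a1 + a2"
      using decA[OF da(2)] by blast
    have xI: "x \<in> inf_chains B1 n" "bd x \<in> inf_chains A1 (n - 1)" using x by (auto simp: ZC_iff)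
    have yI: "y \<in> inf_chains B2 n" "bd y \<in> inf_chains A2 (n - 1)" using y by (auto simp: ZC_iff)
    have fs: "x \<in> FS" "y \<in> FS" "d1 \<in> FS" "d2 \<in> FS" "a1 \<in> FS" "a2 \<in> FS"
      using xI yI d12 a12 by (auto simp: I_fs)
    define c where "c = x - bd d1 - a1"
    have c2: "c = y + bd d2 + a2" using da(3) d12(3) a12(3) fs unfolding c_def
      by (simp add: algebra_simps)
    have bd1: "bd d1 \<in> inf_chains B1 n" using I_bd[OF d12(1)] by simp
    have bd2: "bd d2 \<in> inf_chains B2 n" using I_bd[OF d12(2)] by simp
    have "c \<in> inf_chains B1 n" unfolding c_def using xI bd1 IA1[OF a12(1)] by (simp add: I_diff)
    moreover have "c \<in> inf_chains B2 n" unfolding c2 using yI bd2 IA2[OF a12(2)] by (simp add: I_add)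
    moreover have "bd c \<in> inf_chains A1 (n - 1)" unfolding c_def using fs xI I_bd[OF a12(1)] by (simp add: I_diff)
    moreover have "bd c \<in> inf_chains A2 (n - 1)" unfolding c2 using fs yI I_bd[OF a12(2)] by (simp add: I_add)
    ultimately have cZ: "c \<in> rel_cycles (B1 \<inter> B2) (A1 \<inter> A2) n" by (simp add: ZC_iff I_Int)
    have "c - x \<in> rel_bounds B1 A1 n" unfolding RB_iff c_def using d12(1) a12(1) fs
      by (intro exI[of _ "- d1"] exI[of _ "- a1"]) (simp add: I_neg algebra_simps)
    moreover have "c - y \<in> rel_bounds B2 A2 n" unfolding RB_iff c2 using d12(2) a12(2)
      by (intro exI[of _ d2] exI[of _ a2]) (simp add: algebra_simps)
    ultimately have "mv_f B1 A1 B2 A2 n (cls (rel_bounds (B1 \<inter> B2) (A1 \<inter> A2) n) c) = Y"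
      using Y by (simp add: mvf_cls RB_eqI)
    then show "Y \<in> (mv_f B1 A1 B2 A2 n :: ('v set \<Rightarrow> 'g) set \<Rightarrow> _) ` carrier (rel_homology (B1 \<inter> B2) (A1 \<inter> A2) n)"
      using cZ cls_carrier by blast
  qed
qed

lemma exact2:
  "mv_g B1 A1 B2 A2 n ` carrier (rel_homology B1 A1 n \<times>\<times> rel_homology B2 A2 n)
    = kernel (rel_homology (B1 \<union> B2) (A1 \<union> A2) n)
             (rel_homology (B1 \<inter> B2) (A1 \<inter> A2) (n - 1)) (conn B1 A1 B2 A2 n :: ('v set \<Rightarrow> 'g) set \<Rightarrow> _)"
proof
  show "mv_g B1 A1 B2 A2 n ` carrier (rel_homology B1 A1 n \<times>\<times> rel_homology B2 A2 n)
    \<subseteq> kernel (rel_homology (B1 \<union> B2) (A1 \<union> A2) n)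
             (rel_homology (B1 \<inter> B2) (A1 \<inter> A2) (n - 1)) (conn B1 A1 B2 A2 n :: ('v set \<Rightarrow> 'g) set \<Rightarrow> _)"
  proof
    fix Z :: "('v set \<Rightarrow> 'g) set" assume "Z \<in> mv_g B1 A1 B2 A2 n ` carrier (rel_homology B1 A1 n \<times>\<times> rel_homology B2 A2 n)"
    then obtain x y where x: "(x::'v set \<Rightarrow> 'g) \<in> rel_cycles B1 A1 n" and y: "y \<in> rel_cycles B2 A2 n"
      and Z: "Z = mv_g B1 A1 B2 A2 n (cls (rel_bounds B1 A1 n) x, cls (rel_bounds B2 A2 n) y)"
      by (auto simp: DirProd_def carrier_rh)
    have xI: "x \<in> inf_chains B1 n" "bd x \<in> inf_chains A1 (n - 1)" using x by (auto simp: ZC_iff)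
    have yI: "y \<in> inf_chains B2 n" "bd y \<in> inf_chains A2 (n - 1)" using y by (auto simp: ZC_iff)
    have zc: "x - y \<in> rel_cycles (B1 \<union> B2) (A1 \<union> A2) n"
      using addsub_diff[OF addsub_ZC ZC1_u[OF x] ZC2_u[OF y]] .
    have d: "conndata B1 A1 B2 A2 n (x - y) x (- y) (bd x) (- bd y)"
      using xI yI by (simp add: conndata_def I_neg I_fs)
    have "(0::'v set \<Rightarrow> 'g) \<in> rel_bounds (B1 \<inter> B2) (A1 \<inter> A2) (n - 1)" by (rule RB_zero)
    then show "Z \<in> kernel (rel_homology (B1 \<union> B2) (A1 \<union> A2) n)
             (rel_homology (B1 \<inter> B2) (A1 \<inter> A2) (n - 1)) (conn B1 A1 B2 A2 n)"
      using Z mvg_cls[OF x y] conn_eq[OF zc d] zc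
      by (simp add: kernel_def cls_carrier RB_one_iff)
  qed
next
  show "kernel (rel_homology (B1 \<union> B2) (A1 \<union> A2) n)
             (rel_homology (B1 \<inter> B2) (A1 \<inter> A2) (n - 1)) (conn B1 A1 B2 A2 n :: ('v set \<Rightarrow> 'g) set \<Rightarrow> _)
     \<subseteq> mv_g B1 A1 B2 A2 n ` carrier (rel_homology B1 A1 n \<times>\<times> rel_homology B2 A2 n)"
  proof
    fix Q :: "('v set \<Rightarrow> 'g) set" assume Xk: "Q \<in> kernel (rel_homology (B1 \<union> B2) (A1 \<union> A2) n)
             (rel_homology (B1 \<inter> B2) (A1 \<inter> A2) (n - 1)) (conn B1 A1 B2 A2 n :: ('v set \<Rightarrow> 'g) set \<Rightarrow> _)"
    then obtain z where z: "z \<in> rel_cycles (B1 \<union> B2) (A1 \<union> A2) n" "Q = cls (rel_bounds (B1 \<union> B2) (A1 \<union> A2) n) z"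
      by (auto simp: kernel_def carrier_rh)
    obtain x y a1 a2 where d: "conndata B1 A1 B2 A2 n z x y a1 a2" using conndata_exists[OF z(1)] by blast
    have "bd x - a1 \<in> rel_bounds (B1 \<inter> B2) (A1 \<inter> A2) (n - 1)"
      using Xk z conn_eq[OF z(1) d] by (simp add: kernel_def RB_one_iff)
    then obtain u e where ue: "u \<in> inf_chains (B1 \<inter> B2) n" "e \<in> inf_chains (A1 \<inter> A2) (n - 1)"
      "bd x - a1 = bd u + e" unfolding RB_iff by auto
    have x: "x \<in> inf_chains B1 n" and y: "y \<in> inf_chains B2 n" and a1: "a1 \<in> inf_chains A1 (n - 1)"
      and a2: "a2 \<in> inf_chains A2 (n - 1)" and zxy: "z = x + y" using d by (auto simp: conndata_def)
    have bz: "bd x + bd y = a1 + a2" using conndata_bd[OF d] .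
    have u: "u \<in> inf_chains B1 n" "u \<in> inf_chains B2 n" "u \<in> FS" using ue(1) by (auto simp: I_Int I_fs)
    have e: "e \<in> inf_chains A1 (n - 1)" "e \<in> inf_chains A2 (n - 1)" using ue(2) by (auto simp: I_Int)
    have fs: "x \<in> FS" "y \<in> FS" using x y by (auto simp: I_fs)
    have bx': "bd (x - u) = e + a1" using ue(3) fs u by (simp add: algebra_simps)
    have by': "bd (- (y + u)) = e - a2" using ue(3) bz fs u 
      by (simp add: algebra_simps)
    have x'Z: "x - u \<in> rel_cycles B1 A1 n" using x u bx' e a1 by (simp add: ZC_iff I_diff I_add)
    have y'Z: "- (y + u) \<in> rel_cycles B2 A2 n" using y u by' e a2 by (simp add: ZC_iff I_diff I_add I_neg)
    have "mv_g B1 A1 B2 A2 n (cls (rel_bounds B1 A1 n) (x - u), cls (rel_bounds B2 A2 n) (- (y + u))) = Q"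
      using mvg_cls[OF x'Z y'Z] z zxy by (simp add: algebra_simps)
    moreover have "(cls (rel_bounds B1 A1 n) (x - u), cls (rel_bounds B2 A2 n) (- (y + u)))
       \<in> carrier (rel_homology B1 A1 n \<times>\<times> rel_homology B2 A2 n)"
      using x'Z y'Z by (simp add: DirProd_def cls_carrier)
    ultimately show "Q \<in> mv_g B1 A1 B2 A2 n ` carrier (rel_homology B1 A1 n \<times>\<times> rel_homology B2 A2 n)"
      by blast
  qed
qed

lemma exact3:
  "(conn B1 A1 B2 A2 n :: ('v set \<Rightarrow> 'g) set \<Rightarrow> _) ` carrier (rel_homology (B1 \<union> B2) (A1 \<union> A2) n)
    = kernel (rel_homology (B1 \<inter> B2) (A1 \<inter> A2) (n - 1))
             (rel_homology B1 A1 (n - 1) \<times>\<times> rel_homology B2 A2 (n - 1))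
             (mv_f B1 A1 B2 A2 (n - 1))"
proof
  show "(conn B1 A1 B2 A2 n :: ('v set \<Rightarrow> 'g) set \<Rightarrow> _) ` carrier (rel_homology (B1 \<union> B2) (A1 \<union> A2) n)
    \<subseteq> kernel (rel_homology (B1 \<inter> B2) (A1 \<inter> A2) (n - 1))
             (rel_homology B1 A1 (n - 1) \<times>\<times> rel_homology B2 A2 (n - 1))
             (mv_f B1 A1 B2 A2 (n - 1))"
  proof
    fix W :: "('v set \<Rightarrow> 'g) set" assume "W \<in> (conn B1 A1 B2 A2 n :: ('v set \<Rightarrow> 'g) set \<Rightarrow> _) ` carrier (rel_homology (B1 \<union> B2) (A1 \<union> A2) n)"
    then obtain z where z: "z \<in> rel_cycles (B1 \<union> B2) (A1 \<union> A2) n"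
      and W: "W = conn B1 A1 B2 A2 n (cls (rel_bounds (B1 \<union> B2) (A1 \<union> A2) n) z)"
      by (auto simp: carrier_rh)
    obtain x y a1 a2 where d: "conndata B1 A1 B2 A2 n z x y a1 a2" using conndata_exists[OF z] by blast
    have x: "x \<in> inf_chains B1 n" and y: "y \<in> inf_chains B2 n" and a1: "a1 \<in> inf_chains A1 (n - 1)"
      and a2: "a2 \<in> inf_chains A2 (n - 1)" using d by (auto simp: conndata_def)
    have bz: "bd x + bd y = a1 + a2" using conndata_bd[OF d] .
    have "bd x - a1 \<in> rel_bounds B1 A1 (n - 1)" unfolding RB_iff using x a1
      by (intro exI[of _ x] exI[of _ "- a1"]) (simp add: I_neg)
    moreover have "bd x - a1 \<in> rel_bounds B2 A2 (n - 1)"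
    proof -
      have "bd x - a1 = bd (- y) + a2" using ab_swap[OF bz] by simp
      then show ?thesis unfolding RB_iff using y a2 by (intro exI[of _ "- y"] exI[of _ a2]) (simp add: I_neg)
    qed
    ultimately show "W \<in> kernel (rel_homology (B1 \<inter> B2) (A1 \<inter> A2) (n - 1))
             (rel_homology B1 A1 (n - 1) \<times>\<times> rel_homology B2 A2 (n - 1))
             (mv_f B1 A1 B2 A2 (n - 1))"
      using W conn_eq[OF z d] conn_w[OF d]
      by (simp add: kernel_def cls_carrier mvf_cls DirProd_def RB_one_iff)
  qed
next
  show "kernel (rel_homology (B1 \<inter> B2) (A1 \<inter> A2) (n - 1))
             (rel_homology B1 A1 (n - 1) \<times>\<times> rel_homology B2 A2 (n - 1))
             (mv_f B1 A1 B2 A2 (n - 1))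
     \<subseteq> (conn B1 A1 B2 A2 n :: ('v set \<Rightarrow> 'g) set \<Rightarrow> _) ` carrier (rel_homology (B1 \<union> B2) (A1 \<union> A2) n)"
  proof
    fix Q :: "('v set \<Rightarrow> 'g) set" assume Xk: "Q \<in> kernel (rel_homology (B1 \<inter> B2) (A1 \<inter> A2) (n - 1))
             (rel_homology B1 A1 (n - 1) \<times>\<times> rel_homology B2 A2 (n - 1))
             (mv_f B1 A1 B2 A2 (n - 1) :: ('v set \<Rightarrow> 'g) set \<Rightarrow> _)"
    then obtain c where c: "c \<in> rel_cycles (B1 \<inter> B2) (A1 \<inter> A2) (n - 1)"
      and Q: "Q = cls (rel_bounds (B1 \<inter> B2) (A1 \<inter> A2) (n - 1)) c"
      by (auto simp: kernel_def carrier_rh)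
    have "c \<in> rel_bounds B1 A1 (n - 1)" "c \<in> rel_bounds B2 A2 (n - 1)"
      using Xk Q by (auto simp: kernel_def mvf_cls DirProd_def RB_one_iff)
    then obtain p a1 q a2 where pq: "p \<in> inf_chains B1 n" "a1 \<in> inf_chains A1 (n - 1)" "c = bd p + a1"
      "q \<in> inf_chains B2 n" "a2 \<in> inf_chains A2 (n - 1)" "c = bd q + a2"
      unfolding RB_iff by auto
    have fs: "p \<in> FS" "q \<in> FS" using pq by (auto simp: I_fs)
    have pu: "p \<in> inf_chains (B1 \<union> B2) n" using subsetD[OF I_mono[OF Un_upper1] pq(1)] .
    have qu: "q \<in> inf_chains (B1 \<union> B2) n" using subsetD[OF I_mono[OF Un_upper2] pq(4)] .
    have a1u: "a1 \<in> inf_chains (A1 \<union> A2) (n - 1)" using subsetD[OF I_mono[OF Un_upper1] pq(2)] .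
    have a2u: "a2 \<in> inf_chains (A1 \<union> A2) (n - 1)" using subsetD[OF I_mono[OF Un_upper2] pq(5)] .
    have bp: "bd p = c - a1" using pq(3) by simp
    have bq: "bd q = c - a2" using pq(6) by simp
    have bz: "bd (p - q) = - a1 + a2" using fs bp bq by (simp add: algebra_simps)
    have zc: "p - q \<in> rel_cycles (B1 \<union> B2) (A1 \<union> A2) n"
      using pu qu a1u a2u bz by (simp add: ZC_iff I_diff I_add I_neg)
    have d: "conndata B1 A1 B2 A2 n (p - q) p (- q) (- a1) a2"
      using pq bz by (simp add: conndata_def I_neg)
    have "conn B1 A1 B2 A2 n (cls (rel_bounds (B1 \<union> B2) (A1 \<union> A2) n) (p - q)) = Q"
      using conn_eq[OF zc d] Q pq(3) by simp
    then show "Q \<in> (conn B1 A1 B2 A2 n :: ('v set \<Rightarrow> 'g) set \<Rightarrow> _) ` carrier (rel_homology (B1 \<union> B2) (A1 \<union> A2) n)"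
      using zc cls_carrier by blast
  qed
qed

theorem mv_exact: "MV_long_exact gty B1 A1 B2 A2"
  unfolding MV_long_exact_def
  by (intro exI[of _ "conn B1 A1 B2 A2"] allI conjI hom_f hom_g hom_conn exact1 exact2 exact3)

end




lemma split_I:
  fixes c :: "'v::linorder set \<Rightarrow> 'g::ab_group_add" and Q Y :: "'v set set"
  defines "c1 \<equiv> (\<lambda>\<sigma>. if \<sigma> \<in> Q then c \<sigma> else 0)" and "c2 \<equiv> (\<lambda>\<sigma>. if \<sigma> \<in> Q then 0 else c \<sigma>)"
  assumes c: "c \<in> inf_chains (Q \<union> Y) n"
    and s1: "csupp (bd c1) \<subseteq> Q" and s2: "csupp (bd c2) \<subseteq> Y"
  shows "\<exists>x y. x \<in> inf_chains Q n \<and> y \<in> inf_chains Y n \<and> c = x + y"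
proof -
  have cG: "c \<in> Gchains (Q \<union> Y) n" using c by (simp add: inf_chains_def)
  have sup1: "csupp c1 \<subseteq> csupp c" "csupp c1 \<subseteq> Q" by (auto simp: c1_def csupp_def)
  have sup2: "csupp c2 \<subseteq> csupp c" "csupp c2 \<subseteq> Y" using cG by (auto simp: c2_def csupp_def Gchains_def)
  have g1: "c1 \<in> Gchains Q n" using cG sup1 by (auto simp: Gchains_def intro: finite_subset)
  have g2: "c2 \<in> Gchains Y n" using cG sup2 by (auto simp: Gchains_def intro: finite_subset)
  have "c1 \<in> inf_chains Q n" using g1 bd_G[OF g1 s1] by (simp add: inf_chains_def)
  moreover have "c2 \<in> inf_chains Y n" using g2 bd_G[OF g2 s2] by (simp add: inf_chains_def)
  moreover have "c = c1 + c2" by (simp add: c1_def c2_def fun_eq_iff)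
  ultimately show ?thesis by blast
qed

lemma decomp_cplx:
  assumes Q: "\<And>\<sigma> \<tau>. \<sigma> \<in> Q \<Longrightarrow> \<tau> \<noteq> {} \<Longrightarrow> \<tau> \<subseteq> \<sigma> \<Longrightarrow> \<tau> \<in> Q"
    and Y: "\<And>\<sigma> \<tau>. \<sigma> \<in> Y \<Longrightarrow> \<tau> \<noteq> {} \<Longrightarrow> \<tau> \<subseteq> \<sigma> \<Longrightarrow> \<tau> \<in> Y"
  shows "decomp TYPE('g::ab_group_add) (Q::'v::linorder set set) Y"
  unfolding decomp_def
proof (intro allI impI)
  fix n and c :: "'v set \<Rightarrow> 'g" assume c: "c \<in> inf_chains (Q \<union> Y) n"
  have cG: "c \<in> Gchains (Q \<union> Y) n" using c by (simp add: inf_chains_def)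
  show "\<exists>x y. x \<in> inf_chains Q n \<and> y \<in> inf_chains Y n \<and> c = x + y"
  proof (rule split_I[OF c])
    show "csupp (bd (\<lambda>\<sigma>. if \<sigma> \<in> Q then c \<sigma> else 0)) \<subseteq> Q"
    proof
      fix \<tau> assume "\<tau> \<in> csupp (bd (\<lambda>\<sigma>. if \<sigma> \<in> Q then c \<sigma> else 0))"
      then obtain v where "\<tau> \<noteq> {}" "v \<notin> \<tau>" "insert v \<tau> \<in> csupp (\<lambda>\<sigma>. if \<sigma> \<in> Q then c \<sigma> else (0::'g))"
        using csupp_bd by blast
      then show "\<tau> \<in> Q" using Q[of "insert v \<tau>" \<tau>] by (auto simp: csupp_def split: if_splits)
    qed
    show "csupp (bd (\<lambda>\<sigma>. if \<sigma> \<in> Q then 0 else c \<sigma>)) \<subseteq> Y"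
    proof
      fix \<tau> assume "\<tau> \<in> csupp (bd (\<lambda>\<sigma>. if \<sigma> \<in> Q then 0 else c \<sigma>))"
      then obtain v where v: "\<tau> \<noteq> {}" "v \<notin> \<tau>" "insert v \<tau> \<in> csupp (\<lambda>\<sigma>. if \<sigma> \<in> Q then (0::'g) else c \<sigma>)"
        using csupp_bd by blast
      then have "insert v \<tau> \<in> csupp c" "insert v \<tau> \<notin> Q" by (auto simp: csupp_def split: if_splits)
      then have "insert v \<tau> \<in> Y" using cG by (auto simp: Gchains_def)
      then show "\<tau> \<in> Y" using Y[of "insert v \<tau>" \<tau>] v by auto
    qed
  qed
qed

lemma decomp_hyp:
  assumes hyp: "\<And>\<sigma> \<sigma>'. \<sigma> \<in> Q \<Longrightarrow> \<sigma>' \<in> Y \<Longrightarrow> \<sigma> \<inter> \<sigma>' = {} \<or> \<sigma> \<inter> \<sigma>' \<in> Q \<inter> Y"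
  shows "decomp TYPE('g::ab_group_add) (Q::'v::linorder set set) Y"
  unfolding decomp_def
proof (intro allI impI)
  fix n and c :: "'v set \<Rightarrow> 'g" assume c: "c \<in> inf_chains (Q \<union> Y) n"
  have cG: "c \<in> Gchains (Q \<union> Y) n" using c by (simp add: inf_chains_def)
  have bG: "bd c \<in> Gchains (Q \<union> Y) (n - 1)" using c by (simp add: inf_chains_def)
  define c1 where "c1 = (\<lambda>\<sigma>. if \<sigma> \<in> Q then c \<sigma> else 0)"
  define c2 where "c2 = (\<lambda>\<sigma>. if \<sigma> \<in> Q then 0 else c \<sigma>)"
  have fs: "c1 \<in> FS" "c2 \<in> FS" using G_fs[OF cG] by (auto simp: FS_def c1_def c2_def csupp_def intro: finite_subset)
  have csum: "c = c1 + c2" by (simp add: c1_def c2_def fun_eq_iff)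
  have bsum: "bd c \<tau> = bd c1 \<tau> + bd c2 \<tau>" for \<tau> using fs csum by simp
  have inXY: "\<tau> \<in> Q \<union> Y" if "bd c \<tau> \<noteq> 0" for \<tau> using bG that by (auto simp: Gchains_def csupp_def)
  have both: "\<tau> \<in> Q \<inter> Y" if t1: "bd c1 \<tau> \<noteq> 0" and t2: "bd c2 \<tau> \<noteq> 0" for \<tau>
  proof -
    obtain v where v: "\<tau> \<noteq> {}" "v \<notin> \<tau>" "insert v \<tau> \<in> csupp c1" using bd_nonzero[OF t1] by blast
    obtain u where u: "u \<notin> \<tau>" "insert u \<tau> \<in> csupp c2" using bd_nonzero[OF t2] by blast
    have vX: "insert v \<tau> \<in> Q" using v by (auto simp: c1_def csupp_def split: if_splits)
    have uX: "insert u \<tau> \<notin> Q" "insert u \<tau> \<in> csupp c" using u by (auto simp: c2_def csupp_def split: if_splits)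
    then have uY: "insert u \<tau> \<in> Y" using cG by (auto simp: Gchains_def)
    have "u \<noteq> v" using vX uX by auto
    then have "insert v \<tau> \<inter> insert u \<tau> = \<tau>" using u v by auto
    then show ?thesis using hyp[OF vX uY] v by auto
  qed
  show "\<exists>x y. x \<in> inf_chains Q n \<and> y \<in> inf_chains Y n \<and> c = x + y"
  proof (rule split_I[OF c])
    show "csupp (bd (\<lambda>\<sigma>. if \<sigma> \<in> Q then c \<sigma> else 0)) \<subseteq> Q"
    proof
      fix \<tau> assume "\<tau> \<in> csupp (bd (\<lambda>\<sigma>. if \<sigma> \<in> Q then c \<sigma> else 0))"
      then have t1: "bd c1 \<tau> \<noteq> 0" by (simp add: c1_def csupp_def)
      then obtain v where v: "\<tau> \<noteq> {}" "v \<notin> \<tau>" "insert v \<tau> \<in> csupp c1" using bd_nonzero by blast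
      have vX: "insert v \<tau> \<in> Q" using v by (auto simp: c1_def csupp_def split: if_splits)
      show "\<tau> \<in> Q"
      proof (cases "bd c2 \<tau> = 0")
        case True
        then have "\<tau> \<in> Q \<union> Y" using inXY bsum t1 by auto
        moreover have "\<tau> \<in> Y \<Longrightarrow> \<tau> \<in> Q" using hyp[OF vX, of \<tau>] v by (auto simp: Int_absorb1)
        ultimately show ?thesis by blast
      next
        case False then show ?thesis using both t1 by blast
      qed
    qed
    show "csupp (bd (\<lambda>\<sigma>. if \<sigma> \<in> Q then 0 else c \<sigma>)) \<subseteq> Y"
    proof
      fix \<tau> assume "\<tau> \<in> csupp (bd (\<lambda>\<sigma>. if \<sigma> \<in> Q then 0 else c \<sigma>))"
      then have t2: "bd c2 \<tau> \<noteq> 0" by (simp add: c2_def csupp_def)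
      then obtain u where u: "\<tau> \<noteq> {}" "u \<notin> \<tau>" "insert u \<tau> \<in> csupp c2" using bd_nonzero by blast
      have uX: "insert u \<tau> \<notin> Q" "insert u \<tau> \<in> csupp c" using u by (auto simp: c2_def csupp_def split: if_splits)
      then have uY: "insert u \<tau> \<in> Y" using cG by (auto simp: Gchains_def)
      show "\<tau> \<in> Y"
      proof (cases "bd c1 \<tau> = 0")
        case True
        then have "\<tau> \<in> Q \<union> Y" using inXY bsum t2 by auto
        moreover have "\<tau> \<in> Q \<Longrightarrow> \<tau> \<in> Y" using hyp[OF _ uY, of \<tau>] u by (auto simp: Int_absorb2)
        ultimately show ?thesis by blast
      next
        case False then show ?thesis using both t2 by blast
      qed
    qed
  qed
qed

theorem mainTheorem8:
  fixes H H' :: "'v::linorder set set"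
  assumes "hypergraph H" and "hypergraph H'"
    and "\<And>\<sigma> \<sigma>'. \<sigma> \<in> H \<Longrightarrow> \<sigma>' \<in> H' \<Longrightarrow> \<sigma> \<inter> \<sigma>' = {} \<or> \<sigma> \<inter> \<sigma>' \<in> H \<inter> H'"
  shows "MV_long_exact TYPE('g::ab_group_add) H (lower_cplx H) H' (lower_cplx H')
       \<and> MV_long_exact TYPE('g) (assoc_cplx H) H (assoc_cplx H') H'"
proof
  have lc: "\<tau> \<in> lower_cplx K" if "\<sigma> \<in> lower_cplx K" "\<tau> \<noteq> {}" "\<tau> \<subseteq> \<sigma>" for K :: "'v set set" and \<sigma> \<tau> :: "'v set"
    using that unfolding lower_cplx_def by auto
  have ac: "\<tau> \<in> assoc_cplx K" if "\<sigma> \<in> assoc_cplx K" "\<tau> \<noteq> {}" "\<tau> \<subseteq> \<sigma>" for K :: "'v set set" and \<sigma> \<tau> :: "'v set"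
    using that unfolding assoc_cplx_def by (blast intro: subset_trans)
  interpret m1: mv "TYPE('g)" H "lower_cplx H" H' "lower_cplx H'"
  proof
    show "lower_cplx H \<subseteq> H" "lower_cplx H' \<subseteq> H'" by (auto simp: lower_cplx_def)
    show "decomp TYPE('g) H H'" by (rule decomp_hyp) (rule assms(3))
    show "decomp TYPE('g) (lower_cplx H) (lower_cplx H')" by (rule decomp_cplx; rule lc)
  qed
  show "MV_long_exact TYPE('g::ab_group_add) H (lower_cplx H) H' (lower_cplx H')" by (rule m1.mv_exact)
  interpret m2: mv "TYPE('g)" "assoc_cplx H" H "assoc_cplx H'" H'
  proof
    show "H \<subseteq> assoc_cplx H" "H' \<subseteq> assoc_cplx H'" using assms(1,2)
      by (auto simp: assoc_cplx_def hypergraph_def)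
    show "decomp TYPE('g) H H'" by (rule decomp_hyp) (rule assms(3))
    show "decomp TYPE('g) (assoc_cplx H) (assoc_cplx H')" by (rule decomp_cplx; rule ac)
  qed
  show "MV_long_exact TYPE('g) (assoc_cplx H) H (assoc_cplx H') H'" by (rule m2.mv_exact)
qed


end
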